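(* For any right canonical matrix $Y$ for $T$ at $\lambda_0$ there exists a left canonical matrix $V$ for $T$ at $\lambda_0$ such that $T^{-1}\doteq Y\Delta^{-1}V$. Such a $V\in\mathcal{H}^{r\times n}$ (i.e. any $V\in\mathcal{H}^{r\times n}$ with $T^{-1}\doteq Y\Delta^{-1}V$) is determined uniquely up to addition of a matrix of the form $\Delta H$ with $H\in\mathcal{H}^{r\times n}$. For any such $V$ one has the biorthogonality condition $\Delta^{-1}VTY\Delta^{-1}\doteq\Delta^{-1}$.
   Context: Let $\Omega\subset\mathbb{C}$ be open and $\lambda_0\in\Omega$ fixed. $\mathcal{H}$ denotes the ring of holomorphic functions on $\Omega$, $\mathcal{M}$ the field of meromorphic functions on $\Omega$, and $\mathcal{H}_0$ the ring of functions holomorphic in some neighborhood of $\lambda_0$. Write $\chi_0(\lambda)=\lambda-\lambda_0$. A matrix $M\in\mathcal{H}_0^{n\times n}$ is unimodular if it has an inverse in $\mathcal{H}_0^{n\times n}$. For meromorphic matrices $M_1,M_2$ of equal size, $M_1\doteq M_2$ means that $M_2-M_1$ is holomorphic in a neighborhood of $\lambda_0$. Throughout, $T\in\mathcal{H}^{n\times n}$ with $\det T$ not identically zero and $\det T(\lambda_0)=0$, and $r=\dim\ker T(\lambda_0)$. There exist unimodular $U_L,U_R\in\mathcal{H}_0^{n\times n}$ and uniquely determined integers $m_1\ge\cdots\ge m_n\ge 0$ (the partial multiplicities) with $U_LTU_R=\mathrm{diag}(\chi_0^{m_1},\dots,\chi_0^{m_n})$; $m_i>0$ exactly for $i\le r$.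 Set $\Delta=\mathrm{diag}(\chi_0^{m_1},\dots,\chi_0^{m_r})$. A root function for $T$ at $\lambda_0$ is $y\in\mathcal{H}^n$ with $y(\lambda_0)\neq0$ and $T(\lambda_0)y(\lambda_0)=0$; its multiplicity $\nu(y)$ is the order of the zero of $Ty$ at $\lambda_0$. A right canonical matrix for $T$ at $\lambda_0$ is $Y\in\mathcal{H}^{n\times r}$ whose columns $y_1,\dots,y_r$ are root functions such that (a) $y_1(\lambda_0),\dots,y_r(\lambda_0)$ are linearly independent, (b) $\sum_{i=1}^r\nu(y_i)=\sum_{i=1}^r m_i$, (c) $\nu(y_1)\ge\cdots\ge\nu(y_r)$. A left root function is a row vector $v\in\mathcal{H}^{1\times n}$ with $v(\lambda_0)\ne0$ and $v(\lambda_0)T(\lambda_0)=0$, with multiplicity the order of the zero of $vT$ at $\lambda_0$; a left canonical matrix $V\in\mathcal{H}^{r\times n}$ is defined analogously. *)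

theory Defs
  imports "HOL-Complex_Analysis.Complex_Analysis"
    "Jordan_Normal_Form.Determinant" "Jordan_Normal_Form.Matrix_Kernel"
begin

text \<open>Meromorphic matrix functions are
  represented by their values off the poles; only their values in a punctured
  neighbourhood of lambda0 matter for the relation dot_eq.\<close>

definition hol_mat :: "complex set \<Rightarrow> nat \<Rightarrow> nat \<Rightarrow> (complex \<Rightarrow> complex mat) \<Rightarrow> bool" where
  "hol_mat S nr nc M \<longleftrightarrow>
     (\<forall>z\<in>S. M z \<in> carrier_mat nr nc) \<and>
     (\<forall>i<nr. \<forall>j<nc. (\<lambda>z. M z $$ (i,j)) holomorphic_on S)"

definition hol0_mat :: "complex \<Rightarrow> nat \<Rightarrow> nat \<Rightarrow> (complex \<Rightarrow> complex mat) \<Rightarrow> bool" where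
  "hol0_mat l0 nr nc M \<longleftrightarrow>
     (\<forall>\<^sub>F z in nhds l0. M z \<in> carrier_mat nr nc) \<and>
     (\<forall>i<nr. \<forall>j<nc. (\<lambda>z. M z $$ (i,j)) analytic_on {l0})"

definition unimodular0 :: "complex \<Rightarrow> nat \<Rightarrow> (complex \<Rightarrow> complex mat) \<Rightarrow> bool" where
  "unimodular0 l0 n U \<longleftrightarrow> hol0_mat l0 n n U \<and>
     (\<exists>W. hol0_mat l0 n n W \<and>
          (\<forall>\<^sub>F z in nhds l0. U z * W z = 1\<^sub>m n \<and> W z * U z = 1\<^sub>m n))"

text \<open>M1 \<doteq> M2: M2 - M1 is (after removing removable singularities) holomorphic in a
  neighbourhood of lambda0.\<close>
definition dot_eq :: "complex \<Rightarrow> nat \<Rightarrow> nat \<Rightarrow> (complex \<Rightarrow> complex mat) \<Rightarrow> (complex \<Rightarrow> complex mat) \<Rightarrow> bool" where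
  "dot_eq l0 nr nc M1 M2 \<longleftrightarrow>
     (\<exists>G. hol0_mat l0 nr nc G \<and> (\<forall>\<^sub>F z in at l0. M2 z - M1 z = G z))"

definition partial_mults :: "complex \<Rightarrow> nat \<Rightarrow> (complex \<Rightarrow> complex mat) \<Rightarrow> (nat \<Rightarrow> nat) \<Rightarrow> bool" where
  "partial_mults l0 n T m \<longleftrightarrow>
     (\<forall>i j. i \<le> j \<longrightarrow> j < n \<longrightarrow> m j \<le> m i) \<and>
     (\<exists>UL UR. unimodular0 l0 n UL \<and> unimodular0 l0 n UR \<and>
        (\<forall>\<^sub>F z in nhds l0. UL z * T z * UR z = mat_diag n (\<lambda>i. (z - l0) ^ m i)))"

definition vec_zero_order :: "complex \<Rightarrow> nat \<Rightarrow> (complex \<Rightarrow> complex vec) \<Rightarrow> nat \<Rightarrow> bool" where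
  "vec_zero_order l0 d f k \<longleftrightarrow>
     (\<exists>g. (\<forall>\<^sub>F z in nhds l0. g z \<in> carrier_vec d) \<and>
          (\<forall>i<d. (\<lambda>z. g z $ i) analytic_on {l0}) \<and>
          g l0 \<noteq> 0\<^sub>v d \<and>
          (\<forall>\<^sub>F z in nhds l0. f z = (z - l0) ^ k \<cdot>\<^sub>v g z))"

definition root_fun :: "complex set \<Rightarrow> complex \<Rightarrow> nat \<Rightarrow> (complex \<Rightarrow> complex mat) \<Rightarrow> (complex \<Rightarrow> complex vec) \<Rightarrow> bool" where
  "root_fun S l0 n T y \<longleftrightarrow>
     (\<forall>z\<in>S. y z \<in> carrier_vec n) \<and> (\<forall>i<n. (\<lambda>z. y z $ i) holomorphic_on S) \<and>
     y l0 \<noteq> 0\<^sub>v n \<and> T l0 *\<^sub>v y l0 = 0\<^sub>v n"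

definition root_mult :: "complex \<Rightarrow> nat \<Rightarrow> (complex \<Rightarrow> complex mat) \<Rightarrow> (complex \<Rightarrow> complex vec) \<Rightarrow> nat" where
  "root_mult l0 n T y = (THE k. vec_zero_order l0 n (\<lambda>z. T z *\<^sub>v y z) k)"

text \<open>Left root functions are row vectors v; v T is the row vector row 0 of (v as 1 x n matrix) * T.\<close>
definition left_root_fun :: "complex set \<Rightarrow> complex \<Rightarrow> nat \<Rightarrow> (complex \<Rightarrow> complex mat) \<Rightarrow> (complex \<Rightarrow> complex vec) \<Rightarrow> bool" where
  "left_root_fun S l0 n T v \<longleftrightarrow>
     (\<forall>z\<in>S. v z \<in> carrier_vec n) \<and> (\<forall>i<n. (\<lambda>z. v z $ i) holomorphic_on S) \<and>
     v l0 \<noteq> 0\<^sub>v n \<and> mat_of_row (v l0) * T l0 = 0\<^sub>m 1 n"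

definition left_root_mult :: "complex \<Rightarrow> nat \<Rightarrow> (complex \<Rightarrow> complex mat) \<Rightarrow> (complex \<Rightarrow> complex vec) \<Rightarrow> nat" where
  "left_root_mult l0 n T v = (THE k. vec_zero_order l0 n (\<lambda>z. row (mat_of_row (v z) * T z) 0) k)"

definition right_canonical :: "complex set \<Rightarrow> complex \<Rightarrow> nat \<Rightarrow> (complex \<Rightarrow> complex mat) \<Rightarrow> (nat \<Rightarrow> nat) \<Rightarrow> (complex \<Rightarrow> complex mat) \<Rightarrow> bool" where
  "right_canonical S l0 n T m Y \<longleftrightarrow>
     (let r = kernel_dim (T l0); nu = (\<lambda>j. root_mult l0 n T (\<lambda>z. col (Y z) j)) in
      hol_mat S n r Y \<and>
      (\<forall>j<r. root_fun S l0 n T (\<lambda>z. col (Y z) j)) \<and>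
      (\<forall>c\<in>carrier_vec r. Y l0 *\<^sub>v c = 0\<^sub>v n \<longrightarrow> c = 0\<^sub>v r) \<and>
      (\<Sum>j<r. nu j) = (\<Sum>i<r. m i) \<and>
      (\<forall>i j. i \<le> j \<longrightarrow> j < r \<longrightarrow> nu j \<le> nu i))"

definition left_canonical :: "complex set \<Rightarrow> complex \<Rightarrow> nat \<Rightarrow> (complex \<Rightarrow> complex mat) \<Rightarrow> (nat \<Rightarrow> nat) \<Rightarrow> (complex \<Rightarrow> complex mat) \<Rightarrow> bool" where
  "left_canonical S l0 n T m V \<longleftrightarrow>
     (let r = kernel_dim (T l0); nu = (\<lambda>i. left_root_mult l0 n T (\<lambda>z. row (V z) i)) in
      hol_mat S r n V \<and>
      (\<forall>i<r. left_root_fun S l0 n T (\<lambda>z. row (V z) i)) \<and>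
      (\<forall>c\<in>carrier_vec r. transpose_mat (V l0) *\<^sub>v c = 0\<^sub>v n \<longrightarrow> c = 0\<^sub>v r) \<and>
      (\<Sum>i<r. nu i) = (\<Sum>i<r. m i) \<and>
      (\<forall>i j. i \<le> j \<longrightarrow> j < r \<longrightarrow> nu j \<le> nu i))"

text \<open>Pointwise inverse of a square matrix (meaningful where it is invertible).\<close>
definition mat_inv :: "complex mat \<Rightarrow> complex mat" where
  "mat_inv A = (SOME B. B \<in> carrier_mat (dim_row A) (dim_row A) \<and> inverts_mat A B \<and> inverts_mat B A)"

end

theory Submission
  imports Defs
begin

lemma ana_eq_at_imp_nhds:
  fixes f g :: "complex \<Rightarrow> complex"
  assumes "f analytic_on {a}" "g analytic_on {a}" "\<forall>\<^sub>F z in at a. f z = g z"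
  shows "\<forall>\<^sub>F z in nhds a. f z = g z"
proof -
  have f: "(f \<longlongrightarrow> f a) (at a)" using analytic_at_imp_isCont[OF assms(1)] isContD by blast
  have g: "(g \<longlongrightarrow> g a) (at a)" using analytic_at_imp_isCont[OF assms(2)] isContD by blast
  have "(f \<longlongrightarrow> g a) (at a)" using Lim_transform_eventually[OF g] assms(3)
    by (simp add: eventually_mono)
  hence "f a = g a" using tendsto_unique[OF _ f] by auto
  thus ?thesis using assms(3) by (simp add: eventually_nhds_conv_at)
qed

lemma ana_factor:
  fixes f :: "complex \<Rightarrow> complex"
  assumes "f analytic_on {a}"
  shows "\<exists>h. h analytic_on {a} \<and> (\<forall>z. f z = f a + (z - a) * h z)"
proof -
  obtain e where e: "e > 0" "f holomorphic_on ball a e" using assms analytic_at_ball by blast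
  define h where "h = (\<lambda>z. if z = a then deriv f a else (f z - f a) / (z - a))"
  have "h holomorphic_on ball a e" unfolding h_def
    by (rule pole_lemma[OF e(2)]) (simp add: e(1))
  hence "h analytic_on {a}" using e(1) holomorphic_on_imp_analytic_at by auto
  moreover have "\<forall>z. f z = f a + (z - a) * h z" by (auto simp: h_def)
  ultimately show ?thesis by blast
qed

lemma ana_cancel:
  fixes f h :: "complex \<Rightarrow> complex"
  assumes "f analytic_on {a}" "h analytic_on {a}"
    and "\<forall>\<^sub>F z in at a. (z - a) ^ i * f z = (z - a) ^ j * h z" and "i \<le> j"
  shows "\<forall>\<^sub>F z in nhds a. f z = (z - a) ^ (j - i) * h z"
proof -
  have "\<forall>\<^sub>F z in at a. f z = (z - a) ^ (j - i) * h z"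
  proof -
    have "\<forall>\<^sub>F z in at a. z \<noteq> a" by (simp add: eventually_at_filter)
    thus ?thesis using assms(3)
    proof eventually_elim
      case (elim z)
      have "(z - a) ^ j = (z - a) ^ i * (z - a) ^ (j - i)" using assms(4)
        by (metis le_add_diff_inverse power_add)
      with elim show ?case by simp
    qed
  qed
  moreover have "(\<lambda>z. (z - a) ^ (j - i) * h z) analytic_on {a}" by (auto intro!: analytic_intros assms(2))
  ultimately show ?thesis using ana_eq_at_imp_nhds[OF assms(1)] by blast
qed

lemma ana_cancel_zero:
  fixes f h :: "complex \<Rightarrow> complex"
  assumes "f analytic_on {a}" "h analytic_on {a}"
    and "\<forall>\<^sub>F z in at a. (z - a) ^ i * f z = (z - a) ^ j * h z" and "i < j"
  shows "f a = 0"
  using eventually_nhds_x_imp_x[OF ana_cancel[OF assms(1-3)]] assms(4) by simp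

lemma ana_cong: "f analytic_on {a} \<Longrightarrow> \<forall>\<^sub>F z in nhds a. f z = g z \<Longrightarrow> g analytic_on {a}"
  using analytic_at_cong by blast

lemma eventually_nhds_at: "\<forall>\<^sub>F z in nhds a. P z \<Longrightarrow> \<forall>\<^sub>F z in at a. P z"
  by (simp add: eventually_nhds_conv_at)

lemma hol0_matI:
  assumes "\<forall>\<^sub>F z in nhds a. M z \<in> carrier_mat nr nc"
    and "\<And>i j. i < nr \<Longrightarrow> j < nc \<Longrightarrow> (\<lambda>z. M z $$ (i,j)) analytic_on {a}"
  shows "hol0_mat a nr nc M"
  using assms unfolding hol0_mat_def by auto

lemma hol0_matD:
  assumes "hol0_mat a nr nc M"
  shows "\<forall>\<^sub>F z in nhds a. M z \<in> carrier_mat nr nc"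
    and "\<And>i j. i < nr \<Longrightarrow> j < nc \<Longrightarrow> (\<lambda>z. M z $$ (i,j)) analytic_on {a}"
  using assms unfolding hol0_mat_def by auto

lemma hol0_mat_cong:
  assumes "hol0_mat a nr nc M" "\<forall>\<^sub>F z in nhds a. M z = N z"
  shows "hol0_mat a nr nc N"
proof (rule hol0_matI)
  show "\<forall>\<^sub>F z in nhds a. N z \<in> carrier_mat nr nc"
    using hol0_matD(1)[OF assms(1)] assms(2) by eventually_elim auto
  fix i j assume ij: "i < nr" "j < nc"
  have "\<forall>\<^sub>F z in nhds a. M z $$ (i,j) = N z $$ (i,j)" using assms(2) by eventually_elim auto
  thus "(\<lambda>z. N z $$ (i,j)) analytic_on {a}"
    using hol0_matD(2)[OF assms(1) ij] ana_cong by metis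
qed

lemma hol0_mat_mat:
  assumes "\<And>i j. i < nr \<Longrightarrow> j < nc \<Longrightarrow> (f i j) analytic_on {a}"
  shows "hol0_mat a nr nc (\<lambda>z. mat nr nc (\<lambda>(i,j). f i j z))"
  by (rule hol0_matI) (auto simp: assms)

lemma hol0_const: "C \<in> carrier_mat nr nc \<Longrightarrow> hol0_mat a nr nc (\<lambda>z. C)"
  by (rule hol0_matI) auto

lemma hol0_diag:
  assumes "\<And>i. i < n \<Longrightarrow> (f i) analytic_on {a}"
  shows "hol0_mat a n n (\<lambda>z. mat_diag n (\<lambda>i. f i z))"
proof (rule hol0_matI)
  fix i j assume "i < n" "j < n"
  thus "(\<lambda>z. mat_diag n (\<lambda>i. f i z) $$ (i, j)) analytic_on {a}"
    by (cases "i = j") (auto simp: mat_diag_def assms)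
qed auto

lemma hol0_mult:
  assumes A: "hol0_mat a nr k A" and B: "hol0_mat a k nc B"
  shows "hol0_mat a nr nc (\<lambda>z. A z * B z)"
proof (rule hol0_matI)
  show "\<forall>\<^sub>F z in nhds a. A z * B z \<in> carrier_mat nr nc"
    using hol0_matD(1)[OF A] hol0_matD(1)[OF B] by eventually_elim auto
  fix i j assume ij: "i < nr" "j < nc"
  have "\<forall>\<^sub>F z in nhds a. (\<Sum>l<k. A z $$ (i,l) * B z $$ (l,j)) = (A z * B z) $$ (i,j)"
    using hol0_matD(1)[OF A] hol0_matD(1)[OF B] 
  proof eventually_elim
    case (elim z)
    thus ?case using ij by (auto simp: scalar_prod_def intro!: sum.cong)
  qed
  moreover have "(\<lambda>z. \<Sum>l<k. A z $$ (i,l) * B z $$ (l,j)) analytic_on {a}"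
    using hol0_matD(2)[OF A] hol0_matD(2)[OF B] ij by (auto intro!: analytic_intros)
  ultimately show "(\<lambda>z. (A z * B z) $$ (i,j)) analytic_on {a}" by (rule ana_cong[rotated])
qed

lemma hol0_add:
  assumes A: "hol0_mat a nr nc A" and B: "hol0_mat a nr nc B"
  shows "hol0_mat a nr nc (\<lambda>z. A z + B z)"
proof (rule hol0_matI)
  show "\<forall>\<^sub>F z in nhds a. A z + B z \<in> carrier_mat nr nc"
    using hol0_matD(1)[OF A] hol0_matD(1)[OF B] by eventually_elim auto
  fix i j assume ij: "i < nr" "j < nc"
  have "\<forall>\<^sub>F z in nhds a. A z $$ (i,j) + B z $$ (i,j) = (A z + B z) $$ (i,j)"
    using hol0_matD(1)[OF A] hol0_matD(1)[OF B] by eventually_elim (use ij in auto)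
  moreover have "(\<lambda>z. A z $$ (i,j) + B z $$ (i,j)) analytic_on {a}"
    using hol0_matD(2)[OF A] hol0_matD(2)[OF B] ij by (auto intro!: analytic_intros)
  ultimately show "(\<lambda>z. (A z + B z) $$ (i,j)) analytic_on {a}" by (rule ana_cong[rotated])
qed

lemma hol0_minus:
  assumes A: "hol0_mat a nr nc A" and B: "hol0_mat a nr nc B"
  shows "hol0_mat a nr nc (\<lambda>z. A z - B z)"
proof (rule hol0_matI)
  show "\<forall>\<^sub>F z in nhds a. A z - B z \<in> carrier_mat nr nc"
    using hol0_matD(1)[OF A] hol0_matD(1)[OF B] by eventually_elim auto
  fix i j assume ij: "i < nr" "j < nc"
  have "\<forall>\<^sub>F z in nhds a. A z $$ (i,j) - B z $$ (i,j) = (A z - B z) $$ (i,j)"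
    using hol0_matD(1)[OF A] hol0_matD(1)[OF B] by eventually_elim (use ij in auto)
  moreover have "(\<lambda>z. A z $$ (i,j) - B z $$ (i,j)) analytic_on {a}"
    using hol0_matD(2)[OF A] hol0_matD(2)[OF B] ij by (auto intro!: analytic_intros)
  ultimately show "(\<lambda>z. (A z - B z) $$ (i,j)) analytic_on {a}" by (rule ana_cong[rotated])
qed

lemma hol0_det:
  assumes A: "hol0_mat a n n A"
  shows "(\<lambda>z. det (A z)) analytic_on {a}"
proof -
  have "\<forall>\<^sub>F z in nhds a. (\<Sum> p \<in> {p. p permutes {0 ..< n}}. 
     signof p * (\<Prod> i = 0 ..< n. A z $$ (i, p i))) = det (A z)"
    using hol0_matD(1)[OF A] by eventually_elim (auto simp: det_def')
  moreover have "(\<lambda>z. \<Sum> p \<in> {p. p permutes {0 ..< n}}. 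
     signof p * (\<Prod> i = 0 ..< n. A z $$ (i, p i))) analytic_on {a}"
  proof (intro analytic_intros)
    fix p i assume "p \<in> {p. p permutes {0 ..< n}}" "i \<in> {0..<n}"
    hence "p i < n" by (auto simp: permutes_in_image)
    thus "(\<lambda>z. A z $$ (i, p i)) analytic_on {a}" using hol0_matD(2)[OF A] \<open>i \<in> _\<close> by auto
  qed
  ultimately show ?thesis by (rule ana_cong[rotated])
qed

lemma hol0_mat_delete:
  assumes A: "hol0_mat a n n A"
  shows "hol0_mat a (n-1) (n-1) (\<lambda>z. mat_delete (A z) i j)"
proof (rule hol0_matI)
  show "\<forall>\<^sub>F z in nhds a. mat_delete (A z) i j \<in> carrier_mat (n-1) (n-1)"
    using hol0_matD(1)[OF A] by eventually_elim (auto intro: mat_delete_carrier)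
  fix i' j' assume ij: "i' < n - 1" "j' < n - 1"
  let ?i = "if i' < i then i' else Suc i'" and ?j = "if j' < j then j' else Suc j'"
  have "\<forall>\<^sub>F z in nhds a. A z $$ (?i, ?j) = mat_delete (A z) i j $$ (i',j')"
    using hol0_matD(1)[OF A] by eventually_elim (use ij in \<open>auto simp: mat_delete_def\<close>)
  moreover have "(\<lambda>z. A z $$ (?i, ?j)) analytic_on {a}" using hol0_matD(2)[OF A] ij by auto
  ultimately show "(\<lambda>z. mat_delete (A z) i j $$ (i',j')) analytic_on {a}" by (rule ana_cong[rotated])
qed

lemma hol0_inv:
  assumes A: "hol0_mat a n n A" and d: "det (A a) \<noteq> 0"
  shows "\<exists>B. hol0_mat a n n B \<and> (\<forall>\<^sub>F z in nhds a. A z * B z = 1\<^sub>m n \<and> B z * A z = 1\<^sub>m n)"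
proof -
  define B where "B = (\<lambda>z. (1 / det (A z)) \<cdot>\<^sub>m adj_mat (A z))"
  have dA: "(\<lambda>z. det (A z)) analytic_on {a}" by (rule hol0_det[OF A])
  have ev: "\<forall>\<^sub>F z in nhds a. det (A z) \<noteq> 0"
    using analytic_at_neq_imp_eventually_neq[OF dA d] d by (simp add: eventually_nhds_conv_at)
  have "hol0_mat a n n B"
  proof (rule hol0_matI)
    show "\<forall>\<^sub>F z in nhds a. B z \<in> carrier_mat n n"
      using hol0_matD(1)[OF A] by eventually_elim (auto simp: B_def adj_mat)
    fix i j assume ij: "i < n" "j < n"
    have "\<forall>\<^sub>F z in nhds a. (1 / det (A z)) * ((-1)^(j+i) * det (mat_delete (A z) j i)) = B z $$ (i,j)"
      using hol0_matD(1)[OF A] by eventually_elim (use ij in \<open>auto simp: B_def adj_mat_def cofactor_def\<close>)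
    moreover have "(\<lambda>z. (1 / det (A z)) * ((-1)^(j+i) * det (mat_delete (A z) j i))) analytic_on {a}"
      by (intro analytic_intros dA hol0_det[OF hol0_mat_delete[OF A]]) (use d in auto)
    ultimately show "(\<lambda>z. B z $$ (i,j)) analytic_on {a}" by (rule ana_cong[rotated])
  qed
  moreover have "\<forall>\<^sub>F z in nhds a. A z * B z = 1\<^sub>m n \<and> B z * A z = 1\<^sub>m n"
    using hol0_matD(1)[OF A] ev
  proof eventually_elim
    case (elim z)
    note adj = adj_mat[OF elim(1)]
    have "A z * B z = (1 / det (A z)) \<cdot>\<^sub>m (A z * adj_mat (A z))"
      unfolding B_def by (rule mult_smult_distrib[OF elim(1) adj(1)])
    also have "\<dots> = 1\<^sub>m n" unfolding adj(2) using elim(2) by (intro eq_matI) auto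
    finally have 1: "A z * B z = 1\<^sub>m n" .
    have "B z * A z = (1 / det (A z)) \<cdot>\<^sub>m (adj_mat (A z) * A z)"
      unfolding B_def by (rule mult_smult_assoc_mat[OF adj(1) elim(1)])
    also have "\<dots> = 1\<^sub>m n" unfolding adj(3) using elim(2) by (intro eq_matI) auto
    finally show ?case using 1 by simp
  qed
  ultimately show ?thesis by blast
qed


lemma poly_approx:
  fixes f :: "complex \<Rightarrow> complex"
  assumes "f analytic_on {a}"
  shows "\<exists>P h. P holomorphic_on UNIV \<and> h analytic_on {a} \<and> (\<forall>\<^sub>F z in nhds a. f z = P z + (z - a) ^ N * h z)"
proof (induction N)
  case 0
  show ?case by (rule exI[of _ "\<lambda>_. 0"], rule exI[of _ f]) (auto simp: assms)
next
  case (Suc N)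
  then obtain P h where P: "P holomorphic_on UNIV" "h analytic_on {a}"
    "\<forall>\<^sub>F z in nhds a. f z = P z + (z - a) ^ N * h z" by blast
  obtain h1 where h1: "h1 analytic_on {a}" "\<forall>z. h z = h a + (z - a) * h1 z" using ana_factor[OF P(2)] by blast
  have "(\<lambda>z. P z + h a * (z - a) ^ N) holomorphic_on UNIV" by (intro holomorphic_intros P(1))
  moreover have "\<forall>\<^sub>F z in nhds a. f z = (P z + h a * (z - a) ^ N) + (z - a) ^ Suc N * h1 z"
    using P(3)
  proof eventually_elim
    case (elim z)
    have hz: "h z = h a + (z - a) * h1 z" using h1(2) by blast
    show ?case unfolding elim hz by (simp add: algebra_simps)
  qed
  ultimately show ?case using h1(1) by blast
qed

lemma vzo_carrier: "vec_zero_order a d f k \<Longrightarrow> \<forall>\<^sub>F z in nhds a. f z \<in> carrier_vec d"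
  unfolding vec_zero_order_def by (auto elim: eventually_elim2)

lemma vzo_unique_aux:
  assumes "vec_zero_order a d f k" "vec_zero_order a d f k'" "k < k'"
  shows False
proof -
  obtain g :: "complex \<Rightarrow> complex vec" where g: "\<forall>\<^sub>F z in nhds a. g z \<in> carrier_vec d" "\<forall>i<d. (\<lambda>z. g z $ i) analytic_on {a}"
    "g a \<noteq> 0\<^sub>v d" "\<forall>\<^sub>F z in nhds a. f z = (z - a) ^ k \<cdot>\<^sub>v g z"
    using assms(1) unfolding vec_zero_order_def by blast
  obtain g' :: "complex \<Rightarrow> complex vec" where g': "\<forall>\<^sub>F z in nhds a. g' z \<in> carrier_vec d" "\<forall>i<d. (\<lambda>z. g' z $ i) analytic_on {a}"
    "g' a \<noteq> 0\<^sub>v d" "\<forall>\<^sub>F z in nhds a. f z = (z - a) ^ k' \<cdot>\<^sub>v g' z"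
    using assms(2) unfolding vec_zero_order_def by blast
  have ga: "g a \<in> carrier_vec d" using eventually_nhds_x_imp_x[OF g(1)] .
  have "g a $ i = 0" if i: "i < d" for i
  proof (rule ana_cancel_zero[OF g(2)[rule_format, OF i] g'(2)[rule_format, OF i] _ assms(3)])
    show "\<forall>\<^sub>F z in at a. (z - a) ^ k * g z $ i = (z - a) ^ k' * g' z $ i"
      using eventually_nhds_at[OF g(1)] eventually_nhds_at[OF g(4)] eventually_nhds_at[OF g'(1)]
        eventually_nhds_at[OF g'(4)]
    proof eventually_elim
      case (elim z)
      have "((z - a) ^ k \<cdot>\<^sub>v g z) $ i = ((z - a) ^ k' \<cdot>\<^sub>v g' z) $ i" using elim by metis
      thus ?case using elim i by simp
    qed
  qed
  hence "g a = 0\<^sub>v d" using ga by (intro eq_vecI) auto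
  thus False using g(3) by simp
qed

lemma vzo_unique: "vec_zero_order a d f k \<Longrightarrow> vec_zero_order a d f k' \<Longrightarrow> k = k'"
  by (metis linorder_neqE_nat vzo_unique_aux)

lemma vzo_the: "vec_zero_order a d f k \<Longrightarrow> (THE k. vec_zero_order a d f k) = k"
  using vzo_unique by blast

lemma mat_inv_eq:
  assumes "A \<in> carrier_mat n n" "B \<in> carrier_mat n n" "A * B = 1\<^sub>m n" "B * A = 1\<^sub>m n"
  shows "mat_inv A = B"
proof -
  let ?P = "\<lambda>B. B \<in> carrier_mat (dim_row A) (dim_row A) \<and> inverts_mat A B \<and> inverts_mat B A"
  have P: "?P B" using assms by (auto simp: inverts_mat_def)
  have "?P (mat_inv A)" unfolding mat_inv_def by (rule someI[of ?P, OF P])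
  hence C: "mat_inv A \<in> carrier_mat n n" "mat_inv A * A = 1\<^sub>m n" using assms by (auto simp: inverts_mat_def)
  have "mat_inv A = mat_inv A * (A * B)" using C assms(3) by (simp add: right_mult_one_mat[OF C(1)])
  also have "\<dots> = (mat_inv A * A) * B" by (rule assoc_mult_mat[symmetric, OF C(1) assms(1) assms(2)])
  also have "\<dots> = B" by (simp only: C(2) left_mult_one_mat[OF assms(2)])
  finally show ?thesis .
qed

lemma downward_closed_set:
  assumes "S \<subseteq> {..<n}" "\<And>i j. i \<in> S \<Longrightarrow> j \<le> i \<Longrightarrow> j \<in> S"
  shows "S = {..<card S}"
proof (cases "S = {}")
  case True thus ?thesis by simp
next
  case False
  have fin: "finite S" using assms(1) finite_subset by blast
  have "S = {..<Suc (Max S)}"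
  proof
    show "S \<subseteq> {..<Suc (Max S)}" using fin by (auto simp: less_Suc_eq_le)
    show "{..<Suc (Max S)} \<subseteq> S" using assms(2) Max_in[OF fin False] by (auto simp: less_Suc_eq_le)
  qed
  thus ?thesis by (metis card_lessThan)
qed

lemma kernel_dim_diag:
  fixes m :: "nat \<Rightarrow> nat"
  assumes sorted: "\<forall>i j. i \<le> j \<longrightarrow> j < n \<longrightarrow> m j \<le> m i"
  shows "kernel_dim (mat_diag n (\<lambda>i. (0::complex) ^ m i)) = card {i. i < n \<and> 0 < m i}"
proof -
  define D :: "complex mat" where "D = mat_diag n (\<lambda>i. (0::complex) ^ m i)"
  define R :: "complex mat" where "R = mat n n (\<lambda>(i,j). if j = n - 1 - i then 1 else 0)"
  define Dr :: "complex mat" where "Dr = mat_diag n (\<lambda>i. (0::complex) ^ m (n - 1 - i))"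
  have Rc: "R \<in> carrier_mat n n" and Dc: "D \<in> carrier_mat n n" and Drc: "Dr \<in> carrier_mat n n"
    by (auto simp: R_def D_def Dr_def)
  have sumd: "(\<Sum>j = 0..<n. (if j = n - 1 - i then 1 else 0) * f j) = f (n - 1 - i)"
    if "i < n" for i and f :: "nat \<Rightarrow> complex"
    using that by (simp add: if_distrib[of "\<lambda>x. x * _"] sum.delta' cong: if_cong)
  have RR: "R * R = 1\<^sub>m n"
  proof (rule eq_matI)
    fix i j assume ij: "i < dim_row (1\<^sub>m n)" "j < dim_col (1\<^sub>m n)"
    hence "(R * R) $$ (i,j) = (\<Sum>l = 0..<n. (if l = n - 1 - i then 1 else 0) * R $$ (l, j))"
      by (auto simp: R_def scalar_prod_def intro!: sum.cong)
    also have "\<dots> = R $$ (n - 1 - i, j)" using ij by (subst sumd) auto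
    also have "\<dots> = 1\<^sub>m n $$ (i,j)" using ij by (auto simp: R_def)
    finally show "(R * R) $$ (i,j) = 1\<^sub>m n $$ (i,j)" .
  qed (auto simp: R_def)
  have RDR: "D = R * Dr * R"
  proof (rule eq_matI)
    fix i j assume ij: "i < dim_row (R * Dr * R)" "j < dim_col (R * Dr * R)"
    hence ij': "i < n" "j < n" by (auto simp: R_def)
    have "(R * Dr) = mat n n (\<lambda>(i,j). R $$ (i,j) * (0::complex) ^ m (n - 1 - j))"
      unfolding Dr_def by (subst mat_diag_mult_right[OF Rc]) simp
    hence "(R * Dr * R) $$ (i,j) = (\<Sum>l = 0..<n. (if l = n - 1 - i then 1 else 0) * ((0::complex) ^ m (n - 1 - l) * R $$ (l, j)))"
      using ij' by (auto simp: R_def scalar_prod_def intro!: sum.cong)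
    also have "\<dots> = (0::complex) ^ m (n - 1 - (n - 1 - i)) * R $$ (n - 1 - i, j)" using ij' by (subst sumd) auto
    also have "\<dots> = D $$ (i,j)" using ij' by (auto simp: R_def D_def mat_diag_def)
    finally show "D $$ (i,j) = (R * Dr * R) $$ (i,j)" ..
  qed (auto simp: R_def D_def mat_diag_def)
  have "similar_mat_wit D Dr R R" unfolding similar_mat_wit_def using Rc Dc Drc RR RDR by (auto simp: Let_def)
  hence kd: "kernel.dim n D = kernel.dim n Dr" by (rule similar_mat_wit_kernel_dim[OF Dc])
  define S where "S = {i. i < n \<and> m (n - 1 - i) = 0}"
  have Sdc: "S = {..<card S}"
  proof (rule downward_closed_set[of _ n])
    fix i j assume "i \<in> S" "j \<le> i"
    thus "j \<in> S" using sorted[rule_format, of "n - 1 - i" "n - 1 - j"] by (auto simp: S_def)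
  qed (auto simp: S_def)
  have SS: "\<And>i. i \<in> S \<longleftrightarrow> i < card S"
  proof -
    fix i have "i \<in> S \<longleftrightarrow> i \<in> {..<card S}" by (rule arg_cong[OF Sdc])
    thus "i \<in> S \<longleftrightarrow> i < card S" by (simp only: lessThan_iff)
  qed
  have rowS: "{i. i < n \<and> row Dr i \<noteq> 0\<^sub>v n} = S"
  proof -
    { fix i assume i: "i < n"
      have "row Dr i $ i = (0::complex) ^ m (n - 1 - i)" using i by (auto simp: Dr_def mat_diag_def)
      moreover have "row Dr i = 0\<^sub>v n" if "m (n - 1 - i) \<noteq> 0" using that i
        by (intro eq_vecI) (auto simp: Dr_def mat_diag_def)
      ultimately have "row Dr i \<noteq> 0\<^sub>v n \<longleftrightarrow> m (n - 1 - i) = 0" using i by (cases "m (n - 1 - i) = 0") auto }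
    thus ?thesis by (auto simp: S_def)
  qed
  have ref: "row_echelon_form Dr" unfolding row_echelon_form_def
  proof (rule exI, rule pivot_funI[of _ n])
    let ?f = "\<lambda>i. if i < card S then i else n"
    show "dim_row Dr = n" by (simp add: Dr_def mat_diag_def)
    fix i assume i: "i < n"
    show "?f i \<le> dim_col Dr" using i by (auto simp: Dr_def mat_diag_def)
    have nS: "0 < m (n - Suc i)" if "\<not> i < card S"
    proof -
      have "i \<notin> S" using that SS by blast
      thus ?thesis using i by (auto simp: S_def)
    qed
    show "\<And>j. j < ?f i \<Longrightarrow> Dr $$ (i, j) = 0" using i nS by (auto simp: Dr_def mat_diag_def split: if_splits)
    show "Suc i < n \<Longrightarrow> ?f i < ?f (Suc i) \<or> ?f (Suc i) = dim_col Dr" by (auto simp: Dr_def mat_diag_def)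
    show "?f i < dim_col Dr \<Longrightarrow> Dr $$ (i, ?f i) = 1"
    proof -
      assume "?f i < dim_col Dr"
      hence "i < card S" using i by (auto simp: Dr_def mat_diag_def split: if_splits)
      hence fi: "?f i = i" by simp
      have "i \<in> S" using \<open>i < card S\<close> SS by blast
      hence "m (n - 1 - i) = 0" by (simp add: S_def)
      thus ?thesis unfolding fi using i by (simp add: Dr_def mat_diag_def)
    qed
    show "\<And>i'. ?f i < dim_col Dr \<Longrightarrow> i' < n \<Longrightarrow> i' \<noteq> i \<Longrightarrow> Dr $$ (i', ?f i) = 0"
      using i by (auto simp: Dr_def mat_diag_def split: if_splits)
  qed
  have kdr: "kernel.dim n Dr = n - card S" using find_base_vectors(6)[OF ref Drc, unfolded rowS] .
  have cS: "card S = card {i. i < n \<and> m i = 0}"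
  proof (rule bij_betw_same_card[of "\<lambda>i. n - 1 - i"])
    show "bij_betw (\<lambda>i. n - 1 - i) S {i. i < n \<and> m i = 0}"
      by (rule bij_betwI[of _ _ _ "\<lambda>i. n - 1 - i"]) (auto simp: S_def)
  qed
  have cn: "card {i. i < n \<and> m i = 0} + card {i. i < n \<and> 0 < m i} = n"
  proof -
    have u: "{i. i < n \<and> m i = 0} \<union> {i. i < n \<and> 0 < m i} = {..<n}" by auto
    have d: "{i. i < n \<and> m i = 0} \<inter> {i. i < n \<and> 0 < m i} = {}" by auto
    have "card ({i. i < n \<and> m i = 0} \<union> {i. i < n \<and> 0 < m i}) = card {i. i < n \<and> m i = 0} + card {i. i < n \<and> 0 < m i}"
      by (rule card_Un_disjoint[OF _ _ d]) auto
    thus ?thesis unfolding u by simp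
  qed
  have "kernel_dim D = kernel.dim n D" unfolding kernel_dim_def using Dc by simp
  thus ?thesis unfolding D_def[symmetric] using kd kdr cS cn by linarith
qed


lemma cancel_l: "A \<in> carrier_mat n k \<Longrightarrow> B \<in> carrier_mat k n \<Longrightarrow> C \<in> carrier_mat n j \<Longrightarrow> A * B = 1\<^sub>m n
   \<Longrightarrow> A * (B * C) = (C :: 'a :: semiring_1 mat)"
  by (metis assoc_mult_mat left_mult_one_mat)

lemma mat_diag_cong: "(\<And>i. i < n \<Longrightarrow> f i = g i) \<Longrightarrow> mat_diag n f = mat_diag n g"
  unfolding mat_diag_def by (intro eq_matI) auto

locale mt =
  fixes \<Omega> :: "complex set" and a :: complex and n :: nat and T Y :: "complex \<Rightarrow> complex mat" 
    and m :: "nat \<Rightarrow> nat" and UL UR WL WR :: "complex \<Rightarrow> complex mat"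
  assumes \<Omega>o: "open \<Omega>" and a\<Omega>: "a \<in> \<Omega>" and Thol: "hol_mat \<Omega> n n T"
    and msort: "\<forall>i j. i \<le> j \<longrightarrow> j < n \<longrightarrow> m j \<le> m i"
    and UL: "hol0_mat a n n UL" and UR: "hol0_mat a n n UR" and WL: "hol0_mat a n n WL" and WR: "hol0_mat a n n WR"
    and ULWL: "\<forall>\<^sub>F z in nhds a. UL z * WL z = 1\<^sub>m n \<and> WL z * UL z = 1\<^sub>m n"
    and URWR: "\<forall>\<^sub>F z in nhds a. UR z * WR z = 1\<^sub>m n \<and> WR z * UR z = 1\<^sub>m n"
    and smith: "\<forall>\<^sub>F z in nhds a. UL z * T z * UR z = mat_diag n (\<lambda>i. (z - a) ^ m i)"
    and Ycan: "right_canonical \<Omega> a n T m Y"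
begin

definition "r = kernel_dim (T a)"
definition "D = (\<lambda>z. mat_diag n (\<lambda>i. (z - a) ^ m i))"
definition "Dinv = (\<lambda>z. mat_diag n (\<lambda>i. 1 / (z - a) ^ m i))"
definition "Dl = (\<lambda>z. mat_diag r (\<lambda>i. (z - a) ^ m i))"
definition "Dli = (\<lambda>z. mat_diag r (\<lambda>i. 1 / (z - a) ^ m i))"
definition "X = (\<lambda>z. WR z * Y z)"

lemma Yhol: "hol_mat \<Omega> n r Y" and Yroot: "\<And>j. j < r \<Longrightarrow> root_fun \<Omega> a n T (\<lambda>z. col (Y z) j)"
  and Yinj: "\<And>c. c \<in> carrier_vec r \<Longrightarrow> Y a *\<^sub>v c = 0\<^sub>v n \<Longrightarrow> c = 0\<^sub>v r"
  and Ysum: "(\<Sum>j<r. root_mult a n T (\<lambda>z. col (Y z) j)) = (\<Sum>i<r. m i)"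
  and Ysort: "\<And>i j. i \<le> j \<Longrightarrow> j < r \<Longrightarrow> root_mult a n T (\<lambda>z. col (Y z) j) \<le> root_mult a n T (\<lambda>z. col (Y z) i)"
  using Ycan unfolding right_canonical_def Let_def r_def by auto

lemma hol_hol0: assumes "hol_mat \<Omega> nr nc M" shows "hol0_mat a nr nc M"
proof (rule hol0_matI)
  show "\<forall>\<^sub>F z in nhds a. M z \<in> carrier_mat nr nc"
    using assms eventually_nhds_in_open[OF \<Omega>o a\<Omega>] unfolding hol_mat_def by (auto elim: eventually_mono)
  fix i j assume "i < nr" "j < nc"
  thus "(\<lambda>z. M z $$ (i, j)) analytic_on {a}"
    using assms holomorphic_on_imp_analytic_at[OF _ \<Omega>o a\<Omega>] unfolding hol_mat_def by auto
qed

lemma T0: "hol0_mat a n n T" by (rule hol_hol0[OF Thol])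
lemma Y0: "hol0_mat a n r Y" by (rule hol_hol0[OF Yhol])
lemma D0: "hol0_mat a n n D" unfolding D_def by (rule hol0_diag) (auto intro!: analytic_intros)
lemma Dl0: "hol0_mat a r r Dl" unfolding Dl_def by (rule hol0_diag) (auto intro!: analytic_intros)
lemma X0: "hol0_mat a n r X" unfolding X_def by (rule hol0_mult[OF WR Y0])

lemma carr[simp]: "D z \<in> carrier_mat n n" "Dinv z \<in> carrier_mat n n" "Dl z \<in> carrier_mat r r" "Dli z \<in> carrier_mat r r"
  by (auto simp: D_def Dinv_def Dl_def Dli_def)

definition "good z \<longleftrightarrow> T z \<in> carrier_mat n n \<and> Y z \<in> carrier_mat n r \<and> X z \<in> carrier_mat n r \<and>
   UL z \<in> carrier_mat n n \<and> UR z \<in> carrier_mat n n \<and> WL z \<in> carrier_mat n n \<and> WR z \<in> carrier_mat n n \<and>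
   UL z * WL z = 1\<^sub>m n \<and> WL z * UL z = 1\<^sub>m n \<and> UR z * WR z = 1\<^sub>m n \<and> WR z * UR z = 1\<^sub>m n \<and>
   UL z * T z * UR z = D z"

lemma ev_good: "\<forall>\<^sub>F z in nhds a. good z"
  using hol0_matD(1)[OF T0] hol0_matD(1)[OF Y0] hol0_matD(1)[OF X0] hol0_matD(1)[OF UL] hol0_matD(1)[OF UR]
    hol0_matD(1)[OF WL] hol0_matD(1)[OF WR] ULWL URWR smith
  by eventually_elim (auto simp: good_def D_def)

lemma good_a: "good a" using eventually_nhds_x_imp_x[OF ev_good] .

lemma TWD: assumes "good z" shows "T z = WL z * (D z * WR z)"
proof -
  from assms have c: "T z \<in> carrier_mat n n" "UL z \<in> carrier_mat n n" "UR z \<in> carrier_mat n n"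
    "WL z \<in> carrier_mat n n" "WR z \<in> carrier_mat n n" and i: "WL z * UL z = 1\<^sub>m n" "UR z * WR z = 1\<^sub>m n"
    and s: "UL z * T z * UR z = D z" by (auto simp: good_def)
  have "WL z * (D z * WR z) = WL z * (UL z * (T z * (UR z * WR z)))"
    unfolding s[symmetric] using c by (simp add: assoc_mult_mat[of _ n n _ n _ n])
  also have "\<dots> = T z" using c i by (simp add: cancel_l[of _ n n] right_mult_one_mat)
  finally show ?thesis ..
qed

lemma ULTY: assumes "good z" shows "UL z * (T z * Y z) = D z * X z"
proof -
  from assms have c: "T z \<in> carrier_mat n n" "UL z \<in> carrier_mat n n" "UR z \<in> carrier_mat n n"
    "WL z \<in> carrier_mat n n" "WR z \<in> carrier_mat n n" "Y z \<in> carrier_mat n r" and i: "UL z * WL z = 1\<^sub>m n"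
    by (auto simp: good_def)
  have DW: "D z * WR z \<in> carrier_mat n n" by (rule mult_carrier_mat[OF carr(1) c(5)])
  have "UL z * (T z * Y z) = UL z * (WL z * ((D z * WR z) * Y z))"
    unfolding TWD[OF assms] using c DW by (simp add: assoc_mult_mat[of _ n n _ n _ r])
  also have "\<dots> = UL z * (WL z * (D z * (WR z * Y z)))"
    using c by (simp add: assoc_mult_mat[of _ n n _ n _ r])
  also have "\<dots> = D z * X z"
    using cancel_l[OF c(2) c(4) mult_carrier_mat[OF carr(1) mult_carrier_mat[OF c(5) c(6)]] i] by (simp add: X_def)
  finally show ?thesis .
qed

lemma Y_UR_X: assumes "good z" shows "Y z = UR z * X z"
  using assms by (auto simp: good_def X_def cancel_l[of _ n n])

lemma Da: "D a = mat_diag n (\<lambda>i. (0::complex) ^ m i)" by (simp add: D_def)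

lemma kernel_r: "r = card {i. i < n \<and> 0 < m i}"
proof -
  from good_a have c: "T a \<in> carrier_mat n n" "UL a \<in> carrier_mat n n" "UR a \<in> carrier_mat n n"
    "WL a \<in> carrier_mat n n" "WR a \<in> carrier_mat n n" and i: "UL a * WL a = 1\<^sub>m n" "WR a * UR a = 1\<^sub>m n"
    by (auto simp: good_def)
  have DW: "D a * WR a \<in> carrier_mat n n" by (rule mult_carrier_mat[OF carr(1) c(5)])
  have "r = kernel.dim n (WL a * (D a * WR a))" unfolding r_def kernel_dim_def TWD[OF good_a] using c by simp
  also have "\<dots> = kernel.dim n (D a * WR a)" unfolding mat_kernel_mult_eq[OF DW c(4) c(2) i(1)] ..
  also have "\<dots> = kernel.dim n (D a)" by (rule mat_kernel_dim_mult_eq_right[OF carr(1) c(5) c(3) i(2)])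
  also have "\<dots> = kernel_dim (D a)" unfolding kernel_dim_def by (simp add: D_def mat_diag_def)
  also have "\<dots> = card {i. i < n \<and> 0 < m i}" unfolding Da by (rule kernel_dim_diag[OF msort])
  finally show ?thesis .
qed

lemma rchar: "i < n \<Longrightarrow> 0 < m i \<longleftrightarrow> i < r"
proof -
  have "{i. i < n \<and> 0 < m i} = {..<card {i. i < n \<and> 0 < m i}}"
  proof (rule downward_closed_set[of _ n])
    fix i j assume "i \<in> {i. i < n \<and> 0 < m i}" "j \<le> i"
    thus "j \<in> {i. i < n \<and> 0 < m i}" using msort by fastforce
  qed auto
  hence "{i. i < n \<and> 0 < m i} = {..<r}" unfolding kernel_r .
  moreover assume "i < n"
  ultimately show ?thesis by (metis (mono_tags, lifting) lessThan_iff mem_Collect_eq)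
qed

lemma r_le_n: "r \<le> n" using kernel_r by (metis (no_types, lifting) card_mono finite_lessThan lessThan_def mem_Collect_eq subsetI card_lessThan)

lemma m_pos: "i < r \<Longrightarrow> 0 < m i" using rchar r_le_n by auto
lemma m_zero: "r \<le> i \<Longrightarrow> i < n \<Longrightarrow> m i = 0" using rchar by fastforce

lemma DDinv: "z \<noteq> a \<Longrightarrow> D z * Dinv z = 1\<^sub>m n" "z \<noteq> a \<Longrightarrow> Dinv z * D z = 1\<^sub>m n"
  unfolding D_def Dinv_def mat_diag_diag by (subst mat_diag_one[symmetric], rule mat_diag_cong, simp)+

lemma DlDli: "z \<noteq> a \<Longrightarrow> Dl z * Dli z = 1\<^sub>m r" "z \<noteq> a \<Longrightarrow> Dli z * Dl z = 1\<^sub>m r"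
  unfolding Dl_def Dli_def mat_diag_diag by (subst mat_diag_one[symmetric], rule mat_diag_cong, simp)+

lemma ev_good_at: "\<forall>\<^sub>F z in at a. good z \<and> z \<noteq> a"
  using eventually_nhds_at[OF ev_good] by (auto simp: eventually_at_filter elim: eventually_mono)

lemmas sq_simps = assoc_mult_mat[of _ n n _ n _ n] mult_carrier_mat[of _ n n _ n] cancel_l[of _ n n _ _ n]

lemma Tinv_eq: assumes "good z" "z \<noteq> a" shows "mat_inv (T z) = UR z * (Dinv z * UL z)"
proof (rule mat_inv_eq[of _ n])
  from assms have c: "T z \<in> carrier_mat n n" "UL z \<in> carrier_mat n n" "UR z \<in> carrier_mat n n"
    "WL z \<in> carrier_mat n n" "WR z \<in> carrier_mat n n" and i: "UL z * WL z = 1\<^sub>m n" "WL z * UL z = 1\<^sub>m n"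
    "UR z * WR z = 1\<^sub>m n" "WR z * UR z = 1\<^sub>m n" by (auto simp: good_def)
  note cc = c carr(1)[of z] carr(2)[of z]
  show "T z \<in> carrier_mat n n" "UR z * (Dinv z * UL z) \<in> carrier_mat n n" using cc by (auto simp: sq_simps)
  have "T z * (UR z * (Dinv z * UL z)) = WL z * ((D z * Dinv z) * UL z)"
    unfolding TWD[OF assms(1)] using cc i by (simp add: sq_simps)
  also have "\<dots> = 1\<^sub>m n" using c i DDinv[OF assms(2)] by simp
  finally show "T z * (UR z * (Dinv z * UL z)) = 1\<^sub>m n" .
  have "UR z * (Dinv z * UL z) * T z = UR z * ((Dinv z * D z) * WR z)"
    unfolding TWD[OF assms(1)] using cc i by (simp add: sq_simps)
  also have "\<dots> = 1\<^sub>m n" using c i DDinv[OF assms(2)] by simp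
  finally show "UR z * (Dinv z * UL z) * T z = 1\<^sub>m n" .
qed

end

context mt begin

definition "F j = (\<lambda>z. T z *\<^sub>v col (Y z) j)"
definition "nu j = root_mult a n T (\<lambda>z. col (Y z) j)"

lemma Fentry: "good z \<Longrightarrow> i < n \<Longrightarrow> j < r \<Longrightarrow> F j z $ i = (T z * Y z) $$ (i,j)"
  by (auto simp: F_def good_def)

lemma Fcol: "good z \<Longrightarrow> j < r \<Longrightarrow> F j z = col (T z * Y z) j"
  by (auto simp: F_def good_def)

lemma Xa_col: assumes j: "j < r" shows "\<exists>i0<n. X a $$ (i0,j) \<noteq> 0"
proof (rule ccontr)
  assume "\<not> ?thesis"
  hence "col (X a) j = 0\<^sub>v n" using good_a j by (intro eq_vecI) (auto simp: good_def)
  moreover have "col (Y a) j = UR a *\<^sub>v col (X a) j" using good_a j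
    by (subst Y_UR_X[OF good_a]) (auto simp: good_def)
  ultimately have "col (Y a) j = 0\<^sub>v n" using good_a by (auto simp: good_def)
  moreover have "col (Y a) j \<noteq> 0\<^sub>v n" using Yroot[OF j] unfolding root_fun_def by auto
  ultimately show False by simp
qed

lemma DX_entry: "good z \<Longrightarrow> i < n \<Longrightarrow> j < r \<Longrightarrow> (D z * X z) $$ (i,j) = (z - a) ^ m i * X z $$ (i,j)"
  unfolding D_def good_def by (subst mat_diag_mult_left[of _ _ r]) auto

lemma vzo_exists: assumes j: "j < r" shows "\<exists>k. vec_zero_order a n (F j) k"
proof -
  define vdiv where "vdiv k \<longleftrightarrow> (\<exists>g :: complex \<Rightarrow> complex vec. (\<forall>\<^sub>F z in nhds a. g z \<in> carrier_vec n) \<and>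
     (\<forall>i<n. (\<lambda>z. g z $ i) analytic_on {a}) \<and> (\<forall>\<^sub>F z in nhds a. F j z = (z - a) ^ k \<cdot>\<^sub>v g z))" for k
  obtain i0 where i0: "i0 < n" "X a $$ (i0,j) \<noteq> 0" using Xa_col[OF j] by blast
  have v0: "vdiv 0" unfolding vdiv_def
  proof (intro exI conjI allI impI)
    show "\<forall>\<^sub>F z in nhds a. F j z \<in> carrier_vec n" using ev_good by eventually_elim (auto simp: F_def good_def)
    show "\<forall>\<^sub>F z in nhds a. F j z = (z - a) ^ 0 \<cdot>\<^sub>v F j z" by simp
    fix i assume i: "i < n"
    have "\<forall>\<^sub>F z in nhds a. (T z * Y z) $$ (i,j) = F j z $ i" using ev_good by eventually_elim (use Fentry i j in auto)
    thus "(\<lambda>z. F j z $ i) analytic_on {a}" using hol0_matD(2)[OF hol0_mult[OF T0 Y0] i j] by (rule ana_cong[rotated])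
  qed
  have bound: "k \<le> m i0" if "vdiv k" for k
  proof (rule ccontr)
    assume k: "\<not> k \<le> m i0"
    obtain g :: "complex \<Rightarrow> complex vec" where g: "\<forall>\<^sub>F z in nhds a. g z \<in> carrier_vec n" "\<forall>i<n. (\<lambda>z. g z $ i) analytic_on {a}"
      "\<forall>\<^sub>F z in nhds a. F j z = (z - a) ^ k \<cdot>\<^sub>v g z" using \<open>vdiv k\<close> unfolding vdiv_def by blast
    have "X a $$ (i0,j) = 0"
    proof (rule ana_cancel_zero[of "\<lambda>z. X z $$ (i0,j)" a "\<lambda>z. \<Sum>l<n. UL z $$ (i0,l) * g z $ l" "m i0" k])
      show "(\<lambda>z. X z $$ (i0, j)) analytic_on {a}" using hol0_matD(2)[OF X0 i0(1) j] .
      show "(\<lambda>z. \<Sum>l<n. UL z $$ (i0, l) * g z $ l) analytic_on {a}"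
        using hol0_matD(2)[OF UL] g(2) i0 by (auto intro!: analytic_intros)
      show "m i0 < k" using k by simp
      show "\<forall>\<^sub>F z in at a. (z - a) ^ m i0 * X z $$ (i0, j) = (z - a) ^ k * (\<Sum>l<n. UL z $$ (i0, l) * g z $ l)"
        using eventually_nhds_at[OF ev_good] eventually_nhds_at[OF g(1)] eventually_nhds_at[OF g(3)]
      proof eventually_elim
        case (elim z)
        have c: "UL z \<in> carrier_mat n n" "T z \<in> carrier_mat n n" "Y z \<in> carrier_mat n r" using elim(1) by (auto simp: good_def)
        have "(z - a) ^ m i0 * X z $$ (i0, j) = (D z * X z) $$ (i0,j)" using DX_entry[OF elim(1) i0(1) j] by simp
        also have "\<dots> = (UL z * (T z * Y z)) $$ (i0,j)" using ULTY[OF elim(1)] by simp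
        also have "\<dots> = row (UL z) i0 \<bullet> F j z" using c i0 j Fcol[OF elim(1) j] by simp
        also have "\<dots> = row (UL z) i0 \<bullet> ((z - a) ^ k \<cdot>\<^sub>v g z)" using elim(3) by simp
        also have "\<dots> = (z - a) ^ k * (\<Sum>l<n. UL z $$ (i0, l) * g z $ l)"
          using c i0 elim(2) by (auto simp: scalar_prod_def sum_distrib_left algebra_simps intro!: sum.cong)
        finally show ?case .
      qed
    qed
    thus False using i0 by simp
  qed
  define K where "K = (GREATEST k. vdiv k)"
  have vK: "vdiv K" unfolding K_def by (rule GreatestI_nat[of vdiv 0 "m i0", OF v0 bound])
  have Kmax: "k \<le> K" if "vdiv k" for k unfolding K_def by (rule Greatest_le_nat[of vdiv k "m i0", OF that bound])
  obtain g :: "complex \<Rightarrow> complex vec" where g: "\<forall>\<^sub>F z in nhds a. g z \<in> carrier_vec n" "\<forall>i<n. (\<lambda>z. g z $ i) analytic_on {a}"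
    "\<forall>\<^sub>F z in nhds a. F j z = (z - a) ^ K \<cdot>\<^sub>v g z" using vK unfolding vdiv_def by blast
  have ga: "g a \<in> carrier_vec n" using eventually_nhds_x_imp_x[OF g(1)] .
  have "g a \<noteq> 0\<^sub>v n"
  proof
    assume g0: "g a = 0\<^sub>v n"
    have "\<forall>i. \<exists>h. i < n \<longrightarrow> h analytic_on {a} \<and> (\<forall>z. g z $ i = (z - a) * h z)"
    proof
      fix i show "\<exists>h. i < n \<longrightarrow> h analytic_on {a} \<and> (\<forall>z. g z $ i = (z - a) * h z)"
      proof (cases "i < n")
        case True
        obtain h where h: "h analytic_on {a}" "\<forall>z. g z $ i = g a $ i + (z - a) * h z"
          using ana_factor[OF g(2)[rule_format, OF True]] by blast
        thus ?thesis using g0 True by auto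
      qed auto
    qed
    then obtain hh where hh: "\<And>i. i < n \<Longrightarrow> hh i analytic_on {a} \<and> (\<forall>z. g z $ i = (z - a) * hh i z)"
      by metis
    have "vdiv (Suc K)" unfolding vdiv_def
    proof (intro exI conjI allI impI)
      show "\<forall>\<^sub>F z in nhds a. vec n (\<lambda>i. hh i z) \<in> carrier_vec n" by simp
      show "\<forall>\<^sub>F z in nhds a. F j z = (z - a) ^ Suc K \<cdot>\<^sub>v vec n (\<lambda>i. hh i z)"
        using g(1) g(3) by eventually_elim (rule eq_vecI, use hh in auto)
      fix i assume "i < n" thus "(\<lambda>z. vec n (\<lambda>i. hh i z) $ i) analytic_on {a}" using hh by simp
    qed
    thus False using Kmax by fastforce
  qed
  hence "vec_zero_order a n (F j) K" unfolding vec_zero_order_def using g by blast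
  thus ?thesis by blast
qed

lemma nu_vzo: "j < r \<Longrightarrow> vec_zero_order a n (F j) (nu j)"
  using vzo_exists[of j] vzo_the unfolding nu_def root_mult_def F_def by metis

definition "gg j = (SOME g. (\<forall>\<^sub>F z in nhds a. g z \<in> carrier_vec n) \<and> (\<forall>i<n. (\<lambda>z. g z $ i) analytic_on {a}) \<and>
          g a \<noteq> 0\<^sub>v n \<and> (\<forall>\<^sub>F z in nhds a. F j z = (z - a) ^ nu j \<cdot>\<^sub>v g z))"

lemma gg: assumes "j < r"
  shows "\<forall>\<^sub>F z in nhds a. gg j z \<in> carrier_vec n" "\<And>i. i < n \<Longrightarrow> (\<lambda>z. gg j z $ i) analytic_on {a}"
          "gg j a \<noteq> 0\<^sub>v n" "\<forall>\<^sub>F z in nhds a. F j z = (z - a) ^ nu j \<cdot>\<^sub>v gg j z"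
proof -
  have "\<exists>g. (\<forall>\<^sub>F z in nhds a. g z \<in> carrier_vec n) \<and> (\<forall>i<n. (\<lambda>z. g z $ i) analytic_on {a}) \<and>
          g a \<noteq> 0\<^sub>v n \<and> (\<forall>\<^sub>F z in nhds a. F j z = (z - a) ^ nu j \<cdot>\<^sub>v g z)"
    using nu_vzo[OF assms] unfolding vec_zero_order_def by blast
  from someI_ex[OF this, folded gg_def]
  show "\<forall>\<^sub>F z in nhds a. gg j z \<in> carrier_vec n" "\<And>i. i < n \<Longrightarrow> (\<lambda>z. gg j z $ i) analytic_on {a}"
          "gg j a \<noteq> 0\<^sub>v n" "\<forall>\<^sub>F z in nhds a. F j z = (z - a) ^ nu j \<cdot>\<^sub>v gg j z" by auto
qed

lemma nu_pos: assumes j: "j < r" shows "0 < nu j"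
proof (rule ccontr)
  assume "\<not> 0 < nu j"
  hence "F j a = gg j a" using eventually_nhds_x_imp_x[OF gg(4)[OF j]] eventually_nhds_x_imp_x[OF gg(1)[OF j]] by simp
  moreover have "F j a = 0\<^sub>v n" using Yroot[OF j] unfolding root_fun_def F_def by auto
  ultimately show False using gg(3)[OF j] by simp
qed

definition "G = (\<lambda>z. mat n r (\<lambda>(i,j). gg j z $ i))"
definition "Dnu = (\<lambda>z. mat_diag r (\<lambda>j. (z - a) ^ nu j))"
definition "N = (\<lambda>z. UL z * G z)"

lemma G0: "hol0_mat a n r G" unfolding G_def by (rule hol0_mat_mat) (use gg(2) in auto)
lemma N0: "hol0_mat a n r N" unfolding N_def by (rule hol0_mult[OF UL G0])

lemma ev_gg: "\<forall>\<^sub>F z in nhds a. \<forall>j\<in>{..<r}. gg j z \<in> carrier_vec n \<and> F j z = (z - a) ^ nu j \<cdot>\<^sub>v gg j z"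
  by (rule eventually_ball_finite) (use gg in \<open>auto intro: eventually_conj\<close>)

lemma TYG: assumes "good z" "\<forall>j\<in>{..<r}. gg j z \<in> carrier_vec n \<and> F j z = (z - a) ^ nu j \<cdot>\<^sub>v gg j z"
  shows "T z * Y z = G z * Dnu z"
proof (rule eq_matI)
  have c: "T z \<in> carrier_mat n n" "Y z \<in> carrier_mat n r" using assms(1) by (auto simp: good_def)
  have GD: "G z * Dnu z = mat n r (\<lambda>(i,j). G z $$ (i,j) * (z - a) ^ nu j)"
    unfolding Dnu_def by (rule mat_diag_mult_right) (simp add: G_def)
  fix i j assume "i < dim_row (G z * Dnu z)" "j < dim_col (G z * Dnu z)"
  hence ij: "i < n" "j < r" unfolding GD by auto
  have "(T z * Y z) $$ (i,j) = F j z $ i" using Fentry[OF assms(1) ij] by simp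
  also have "\<dots> = (z - a) ^ nu j * gg j z $ i"
  proof -
    have "gg j z \<in> carrier_vec n" "F j z = (z - a) ^ nu j \<cdot>\<^sub>v gg j z" using assms(2) ij by auto
    thus ?thesis using ij by simp
  qed
  also have "\<dots> = (G z * Dnu z) $$ (i,j)" unfolding GD using ij by (simp add: G_def)
  finally show "(T z * Y z) $$ (i,j) = (G z * Dnu z) $$ (i,j)" .
qed (use assms in \<open>auto simp: good_def G_def Dnu_def mat_diag_def\<close>)

lemma DXN: assumes "good z" "\<forall>j\<in>{..<r}. gg j z \<in> carrier_vec n \<and> F j z = (z - a) ^ nu j \<cdot>\<^sub>v gg j z"
  shows "D z * X z = N z * Dnu z"
proof -
  have c: "UL z \<in> carrier_mat n n" using assms(1) by (auto simp: good_def)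
  have "D z * X z = UL z * (T z * Y z)" using ULTY[OF assms(1)] ..
  also have "\<dots> = UL z * (G z * Dnu z)" using TYG[OF assms] by simp
  also have "\<dots> = N z * Dnu z" unfolding N_def
    using assoc_mult_mat[OF c _ mat_diag_dim, of "G z" r "\<lambda>j. (z - a) ^ nu j"] by (simp add: G_def Dnu_def)
  finally show ?thesis .
qed

lemma ev_DXN: "\<forall>\<^sub>F z in nhds a. good z \<and> D z * X z = N z * Dnu z"
  using ev_good ev_gg by eventually_elim (use DXN in auto)

lemma N_carr: "N z \<in> carrier_mat n r" if "good z" using that by (auto simp: N_def G_def good_def)

lemma entry_rel: "\<forall>\<^sub>F z in nhds a. (z - a) ^ m i * X z $$ (i,j) = (z - a) ^ nu j * N z $$ (i,j)"
  if "i < n" "j < r"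
  using ev_DXN
proof eventually_elim
  case (elim z)
  have "(z - a) ^ m i * X z $$ (i,j) = (D z * X z) $$ (i,j)" using DX_entry[OF conjunct1[OF elim] that] by simp
  also have "\<dots> = (N z * Dnu z) $$ (i,j)" using elim by simp
  also have "\<dots> = (z - a) ^ nu j * N z $$ (i,j)" unfolding Dnu_def
    using mat_diag_mult_right[OF N_carr[OF conjunct1[OF elim]]] that by simp
  finally show ?case .
qed

end

lemma mat_vec_zero: "A \<in> carrier_mat nr nc \<Longrightarrow> A *\<^sub>v 0\<^sub>v nc = (0\<^sub>v nr :: 'a :: comm_ring_1 vec)"
  by (intro eq_vecI) (auto simp: scalar_prod_def)

context mt begin

lemma Xzero: assumes k: "k < r" "m k < nu k" and i: "i < n" "m i \<le> m k" and j: "j \<le> k"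
  shows "X a $$ (i,j) = 0"
proof -
  have "nu k \<le> nu j" using Ysort[OF j k(1)] unfolding nu_def .
  have jr: "j < r" using j k by simp
  show ?thesis
    by (rule ana_cancel_zero[OF hol0_matD(2)[OF X0 i(1) jr] hol0_matD(2)[OF N0 i(1) jr] eventually_nhds_at[OF entry_rel[OF i(1) jr]]])
      (use \<open>nu k \<le> nu j\<close> k i in simp)
qed

lemma nu_le_m: assumes k: "k < r" shows "nu k \<le> m k"
proof (rule ccontr)
  assume "\<not> nu k \<le> m k"
  hence k2: "m k < nu k" by simp
  have Xc: "X a \<in> carrier_mat n r" using good_a by (auto simp: good_def)
  have kn: "k < n" using k r_le_n by simp
  define A where "A = mat (Suc k) (Suc k) (\<lambda>(i,j). X a $$ (i,j))"
  have Ac: "A \<in> carrier_mat (Suc k) (Suc k)" by (simp add: A_def)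
  have "det A = 0"
  proof -
    have pz: "(\<Prod>i = 0..<Suc k. A $$ (i, p i)) = 0" if "p permutes {0..<Suc k}" for p
    proof -
      have "p k < Suc k" using permutes_in_image[OF that] by simp
      hence "A $$ (k, p k) = 0" unfolding A_def using Xzero[OF k k2 kn order.refl] by simp
      thus ?thesis by (intro prod_zero) auto
    qed
    show ?thesis unfolding det_def'[OF Ac]
    proof (rule sum.neutral, rule ballI)
      fix p assume "p \<in> {p. p permutes {0..<Suc k}}"
      hence "(\<Prod>i = 0..<Suc k. A $$ (i, p i)) = 0" using pz by blast
      thus "signof p * (\<Prod>i = 0..<Suc k. A $$ (i, p i)) = 0" by (simp only: mult_zero_right)
    qed
  qed
  then obtain v where v: "v \<in> carrier_vec (Suc k)" "v \<noteq> 0\<^sub>v (Suc k)" "A *\<^sub>v v = 0\<^sub>v (Suc k)"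
    using det_0_iff_vec_prod_zero[OF Ac] by blast
  define c where "c = vec r (\<lambda>j. if j < Suc k then v $ j else 0)"
  have cc: "c \<in> carrier_vec r" by (simp add: c_def)
  have sumc: "row (X a) i \<bullet> c = (\<Sum>j = 0..<Suc k. X a $$ (i,j) * v $ j)" if i: "i < n" for i
  proof -
    have "row (X a) i \<bullet> c = (\<Sum>j = 0..<r. X a $$ (i,j) * (if j < Suc k then v $ j else 0))"
      using Xc i by (auto simp: scalar_prod_def c_def intro!: sum.cong)
    also have "\<dots> = (\<Sum>j = 0..<Suc k. X a $$ (i,j) * v $ j)"
      by (rule sum.mono_neutral_cong_right) (use k in auto)
    finally show ?thesis .
  qed
  have "X a *\<^sub>v c = 0\<^sub>v n"
  proof (rule eq_vecI)
    fix i assume "i < dim_vec (0\<^sub>v n)" hence i: "i < n" by simp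
    have "(X a *\<^sub>v c) $ i = (\<Sum>j = 0..<Suc k. X a $$ (i,j) * v $ j)" using sumc[OF i] Xc i by simp
    also have "\<dots> = 0"
    proof (cases "i < Suc k")
      case True
      have "(A *\<^sub>v v) $ i = (\<Sum>j = 0..<Suc k. X a $$ (i,j) * v $ j)"
        using True v(1) by (auto simp: A_def scalar_prod_def intro!: sum.cong)
      thus ?thesis using v(3) True by simp
    next
      case False
      have "m i \<le> m k" using msort False i by simp
      hence "X a $$ (i,j) = 0" if "j < Suc k" for j using Xzero[OF k k2 i] that by simp
      thus ?thesis by simp
    qed
    finally show "(X a *\<^sub>v c) $ i = 0\<^sub>v n $ i" using i by simp
  qed (use Xc in simp)
  moreover have URc: "UR a \<in> carrier_mat n n" using good_a by (simp add: good_def)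
  moreover have "Y a *\<^sub>v c = UR a *\<^sub>v (X a *\<^sub>v c)"
    by (subst Y_UR_X[OF good_a]) (rule assoc_mult_mat_vec[OF URc Xc cc])
  ultimately have "Y a *\<^sub>v c = 0\<^sub>v n" by (simp add: mat_vec_zero)
  hence "c = 0\<^sub>v r" using Yinj[OF cc] by simp
  moreover have "\<exists>j<Suc k. v $ j \<noteq> 0"
  proof (rule ccontr)
    assume "\<not> (\<exists>j<Suc k. v $ j \<noteq> 0)"
    hence "v = 0\<^sub>v (Suc k)" using v(1) by (intro eq_vecI) auto
    thus False using v(2) by simp
  qed
  then obtain j where "j < Suc k" "v $ j \<noteq> 0" by blast
  hence "c $ j \<noteq> 0" using k by (simp add: c_def)
  ultimately show False using k \<open>j < Suc k\<close> by simp
qed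

lemma nu_eq: assumes j: "j < r" shows "nu j = m j"
proof -
  have "(\<Sum>j<r. m j - nu j) = (\<Sum>j<r. m j) - (\<Sum>j<r. nu j)" by (rule sum_subtractf_nat) (use nu_le_m in auto)
  also have "\<dots> = 0" using Ysum unfolding nu_def by simp
  finally have "\<forall>j\<in>{..<r}. m j - nu j = 0" by simp
  hence "m j - nu j = 0" using j by simp
  thus ?thesis using nu_le_m[OF j] by linarith
qed

lemma Dnu_Dl: "Dnu z = Dl z" unfolding Dnu_def Dl_def by (rule mat_diag_cong) (simp add: nu_eq)

definition "M = (\<lambda>z. mat r r (\<lambda>(i,j). N z $$ (i,j)))"
definition "X1 = (\<lambda>z. mat r r (\<lambda>(i,j). X z $$ (i,j)))"
definition "E = (mat r n (\<lambda>(i,j). if i = j then 1 else 0) :: complex mat)"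

lemma M0: "hol0_mat a r r M" unfolding M_def
  by (rule hol0_mat_mat) (use hol0_matD(2)[OF N0] r_le_n in auto)
lemma X10: "hol0_mat a r r X1" unfolding X1_def
  by (rule hol0_mat_mat) (use hol0_matD(2)[OF X0] r_le_n in auto)

lemma Ec: "E \<in> carrier_mat r n" by (simp add: E_def)

lemma E_mult: assumes "A \<in> carrier_mat n k" shows "E * A = mat r k (\<lambda>(i,j). A $$ (i,j))"
proof (rule eq_matI)
  fix i j assume ij: "i < dim_row (mat r k (\<lambda>(i,j). A $$ (i,j)))" "j < dim_col (mat r k (\<lambda>(i,j). A $$ (i,j)))"
  hence ij': "i < r" "j < k" by auto
  have "(E * A) $$ (i,j) = (\<Sum>l = 0..<n. (if l = i then 1 else 0) * A $$ (l,j))"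
    using assms ij' r_le_n by (auto simp: E_def scalar_prod_def intro!: sum.cong)
  also have "\<dots> = A $$ (i,j)" using ij' r_le_n by (simp add: if_distrib[of "\<lambda>x. x * _"] sum.delta cong: if_cong)
  finally show "(E * A) $$ (i,j) = mat r k (\<lambda>(i,j). A $$ (i,j)) $$ (i,j)" using ij' by simp
qed (use assms in \<open>auto simp: E_def\<close>)

lemma EX: "good z \<Longrightarrow> E * X z = X1 z" unfolding X1_def by (rule E_mult) (simp add: good_def)
lemma EN: "good z \<Longrightarrow> E * N z = M z" unfolding M_def by (rule E_mult[OF N_carr])

lemma X_low: assumes i: "r \<le> i" "i < n" and j: "j < r" shows "X a $$ (i,j) = 0"
proof -
  have "m i = 0" using m_zero[OF i] .
  thus ?thesis
    using ana_cancel_zero[OF hol0_matD(2)[OF X0 i(2) j] hol0_matD(2)[OF N0 i(2) j] eventually_nhds_at[OF entry_rel[OF i(2) j]]]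
      nu_pos[OF j] by simp
qed

lemma detX1: "det (X1 a) \<noteq> 0"
proof
  assume "det (X1 a) = 0"
  then obtain v where v: "v \<in> carrier_vec r" "v \<noteq> 0\<^sub>v r" "X1 a *\<^sub>v v = 0\<^sub>v r"
    using det_0_iff_vec_prod_zero[of "X1 a" r] by (auto simp: X1_def)
  have Xc: "X a \<in> carrier_mat n r" using good_a by (auto simp: good_def)
  have "X a *\<^sub>v v = 0\<^sub>v n"
  proof (rule eq_vecI)
    fix i assume "i < dim_vec (0\<^sub>v n)" hence i: "i < n" by simp
    have "(X a *\<^sub>v v) $ i = (\<Sum>j = 0..<r. X a $$ (i,j) * v $ j)" using Xc i v(1) by (auto simp: scalar_prod_def)
    also have "\<dots> = 0"
    proof (cases "i < r")
      case True
      have "(X1 a *\<^sub>v v) $ i = (\<Sum>j = 0..<r. X a $$ (i,j) * v $ j)"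
        using True v(1) by (auto simp: X1_def scalar_prod_def intro!: sum.cong)
      thus ?thesis using v(3) True by simp
    next
      case False thus ?thesis using X_low[of i] i by simp
    qed
    finally show "(X a *\<^sub>v v) $ i = 0\<^sub>v n $ i" using i by simp
  qed (use Xc in simp)
  moreover have URc: "UR a \<in> carrier_mat n n" using good_a by (simp add: good_def)
  moreover have "Y a *\<^sub>v v = UR a *\<^sub>v (X a *\<^sub>v v)"
    by (subst Y_UR_X[OF good_a]) (rule assoc_mult_mat_vec[OF URc Xc v(1)])
  ultimately have "Y a *\<^sub>v v = 0\<^sub>v n" by (simp add: mat_vec_zero)
  thus False using Yinj[OF v(1)] v(2) by simp
qed

lemma DlX1: "\<forall>\<^sub>F z in nhds a. Dl z * X1 z = M z * Dl z"
  using ev_DXN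
proof eventually_elim
  case (elim z)
  have Nc: "N z \<in> carrier_mat n r" using N_carr elim by simp
  show ?case
  proof (rule eq_matI)
    fix i j assume "i < dim_row (M z * Dl z)" "j < dim_col (M z * Dl z)"
    hence ij: "i < r" "j < r" by (auto simp: M_def Dl_def mat_diag_def)
    hence "i < n" using r_le_n by simp
    have "(Dl z * X1 z) $$ (i,j) = (z - a) ^ m i * X z $$ (i,j)"
      unfolding Dl_def using ij by (subst mat_diag_mult_left[of _ _ r]) (auto simp: X1_def)
    also have "\<dots> = (D z * X z) $$ (i,j)" using DX_entry[OF conjunct1[OF elim] \<open>i < n\<close> ij(2)] by simp
    also have "\<dots> = (N z * Dl z) $$ (i,j)" using elim Dnu_Dl by simp
    also have "\<dots> = N z $$ (i,j) * (z - a) ^ m j" unfolding Dl_def using Nc ij r_le_n by (subst mat_diag_mult_right[OF Nc]) auto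
    also have "\<dots> = (M z * Dl z) $$ (i,j)" unfolding Dl_def using ij by (subst mat_diag_mult_right[of _ r]) (auto simp: M_def)
    finally show "(Dl z * X1 z) $$ (i,j) = (M z * Dl z) $$ (i,j)" .
  qed (auto simp: M_def Dl_def X1_def mat_diag_def)
qed

lemma det_Dl: "z \<noteq> a \<Longrightarrow> det (Dl z) \<noteq> 0"
  using det_mult[OF carr(3) carr(4), of z z] DlDli(1)[of z] by auto

lemma detM: "det (M a) \<noteq> 0"
proof -
  have na: "\<forall>\<^sub>F z in at a. z \<noteq> a" by (simp add: eventually_at_filter)
  have "\<forall>\<^sub>F z in at a. det (X1 z) = det (M z)"
    using eventually_nhds_at[OF DlX1] eventually_nhds_at[OF hol0_matD(1)[OF X10]] eventually_nhds_at[OF hol0_matD(1)[OF M0]]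
      na
  proof eventually_elim
    case (elim z)
    have "det (Dl z) * det (X1 z) = det (M z) * det (Dl z)"
      using det_mult[OF carr(3) elim(2)] det_mult[OF elim(3) carr(3)] elim(1) by metis
    thus ?case using det_Dl[OF elim(4)] by (simp add: mult.commute)
  qed
  from eventually_nhds_x_imp_x[OF ana_eq_at_imp_nhds[OF hol0_det[OF X10] hol0_det[OF M0] this]]
  show ?thesis using detX1 by simp
qed

definition "X1i = (SOME B. hol0_mat a r r B \<and> (\<forall>\<^sub>F z in nhds a. X1 z * B z = 1\<^sub>m r \<and> B z * X1 z = 1\<^sub>m r))"
definition "Mi = (SOME B. hol0_mat a r r B \<and> (\<forall>\<^sub>F z in nhds a. M z * B z = 1\<^sub>m r \<and> B z * M z = 1\<^sub>m r))"

lemma X1i: "hol0_mat a r r X1i" "\<forall>\<^sub>F z in nhds a. X1 z * X1i z = 1\<^sub>m r \<and> X1i z * X1 z = 1\<^sub>m r"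
  using someI_ex[OF hol0_inv[OF X10 detX1], folded X1i_def] by auto
lemma Mi: "hol0_mat a r r Mi" "\<forall>\<^sub>F z in nhds a. M z * Mi z = 1\<^sub>m r \<and> Mi z * M z = 1\<^sub>m r"
  using someI_ex[OF hol0_inv[OF M0 detM], folded Mi_def] by auto

definition "L = (\<lambda>z. X1i z * (E * WR z))"
lemma L0: "hol0_mat a r n L" unfolding L_def by (rule hol0_mult[OF X1i(1) hol0_mult[OF hol0_const[OF Ec] WR]])

definition "good2 z \<longleftrightarrow> good z \<and> D z * X z = N z * Dl z \<and> Dl z * X1 z = M z * Dl z \<and>
  X1 z * X1i z = 1\<^sub>m r \<and> X1i z * X1 z = 1\<^sub>m r \<and> M z * Mi z = 1\<^sub>m r \<and> Mi z * M z = 1\<^sub>m r \<and>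
  X1i z \<in> carrier_mat r r \<and> Mi z \<in> carrier_mat r r \<and> T z * Y z = G z * Dl z"

lemma ev_good2: "\<forall>\<^sub>F z in nhds a. good2 z"
  using ev_DXN DlX1 X1i(2) Mi(2) hol0_matD(1)[OF X1i(1)] hol0_matD(1)[OF Mi(1)] ev_gg ev_good
  by eventually_elim (auto simp: good2_def Dnu_Dl[symmetric] intro: TYG)

lemma LY: assumes "good2 z" shows "L z * Y z = 1\<^sub>m r"
proof -
  from assms have c: "X1i z \<in> carrier_mat r r" "WR z \<in> carrier_mat n n" "Y z \<in> carrier_mat n r" "good z"
    and i: "X1i z * X1 z = 1\<^sub>m r" by (auto simp: good2_def good_def)
  have "L z * Y z = X1i z * ((E * WR z) * Y z)" unfolding L_def
    by (rule assoc_mult_mat[OF c(1) mult_carrier_mat[OF Ec c(2)] c(3)])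
  also have "\<dots> = X1i z * (E * X z)" unfolding X_def using assoc_mult_mat[OF Ec c(2) c(3)] by simp
  also have "\<dots> = 1\<^sub>m r" using EX[OF c(4)] i by simp
  finally show ?thesis .
qed

end

lemma mat_minus_eq: "A \<in> carrier_mat nr nc \<Longrightarrow> B \<in> carrier_mat nr nc \<Longrightarrow> A - B = C \<Longrightarrow> A = B + (C :: 'a :: ab_group_add mat)"
  by (intro eq_matI) auto

lemma add_minus_cancel_mat: "A \<in> carrier_mat nr nc \<Longrightarrow> B \<in> carrier_mat nr nc \<Longrightarrow> C \<in> carrier_mat nr nc \<Longrightarrow>
  (A + B) + C - A = B + (C :: 'a :: ab_group_add mat)"
  by (intro eq_matI) auto

context mt begin

lemma Tinv_facts: assumes "good z" "z \<noteq> a"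
  shows "mat_inv (T z) \<in> carrier_mat n n" "mat_inv (T z) * T z = 1\<^sub>m n"
proof -
  from assms have c: "T z \<in> carrier_mat n n" "UL z \<in> carrier_mat n n" "UR z \<in> carrier_mat n n"
    "WL z \<in> carrier_mat n n" "WR z \<in> carrier_mat n n" and i: "UL z * WL z = 1\<^sub>m n" "WL z * UL z = 1\<^sub>m n"
    "UR z * WR z = 1\<^sub>m n" "WR z * UR z = 1\<^sub>m n" by (auto simp: good_def)
  note cc = c carr(1)[of z] carr(2)[of z]
  show "mat_inv (T z) \<in> carrier_mat n n" unfolding Tinv_eq[OF assms] using cc by (auto simp: sq_simps)
  have "UR z * (Dinv z * UL z) * T z = UR z * ((Dinv z * D z) * WR z)"
    unfolding TWD[OF assms(1)] using cc i by (simp add: sq_simps)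
  also have "\<dots> = 1\<^sub>m n" using c i DDinv[OF assms(2)] by simp
  finally show "mat_inv (T z) * T z = 1\<^sub>m n" unfolding Tinv_eq[OF assms] .
qed

lemma ev_at2: "\<forall>\<^sub>F z in at a. good2 z \<and> z \<noteq> a"
  using eventually_nhds_at[OF ev_good2] by (auto simp: eventually_at_filter elim: eventually_mono)

lemma part3:
  assumes V: "hol0_mat a r n V" and de: "dot_eq a n n (\<lambda>z. mat_inv (T z)) (\<lambda>z. Y z * Dli z * V z)"
  shows "dot_eq a r r (\<lambda>z. Dli z * V z * T z * Y z * Dli z) Dli"
proof -
  obtain G1 where G1: "hol0_mat a n n G1" "\<forall>\<^sub>F z in at a. Y z * Dli z * V z - mat_inv (T z) = G1 z"
    using de unfolding dot_eq_def by blast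
  define W where "W = (\<lambda>z. 0\<^sub>m r r - L z * G1 z * G z)"
  have W0: "hol0_mat a r r W" unfolding W_def
    by (rule hol0_minus[OF hol0_const hol0_mult[OF hol0_mult[OF L0 G1(1)] G0]]) simp
  have "\<forall>\<^sub>F z in at a. Dli z - Dli z * V z * T z * Y z * Dli z = W z"
    using ev_at2 G1(2) eventually_nhds_at[OF hol0_matD(1)[OF V]] eventually_nhds_at[OF hol0_matD(1)[OF G1(1)]]
      eventually_nhds_at[OF hol0_matD(1)[OF L0]] eventually_nhds_at[OF hol0_matD(1)[OF G0]]
  proof eventually_elim
    case (elim z)
    from elim have g2: "good2 z" and za: "z \<noteq> a" by auto
    from g2 have Yc: "Y z \<in> carrier_mat n r" and Tc: "T z \<in> carrier_mat n n" and TY: "T z * Y z = G z * Dl z"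
      by (auto simp: good2_def good_def)
    note Vc = elim(3) and G1c = elim(4) and Lc = elim(5) and Gc = elim(6)
    note Dlic = carr(4)[of z] and Dlc = carr(3)[of z]
    note Ti = Tinv_facts[OF conjunct1[OF g2[unfolded good2_def]] za]
    have LY1: "L z * Y z = 1\<^sub>m r" by (rule LY[OF g2])
    have e1: "Y z * Dli z * V z = mat_inv (T z) + G1 z"
      by (rule mat_minus_eq[OF mult_carrier_mat[OF mult_carrier_mat[OF Yc Dlic] Vc] Ti(1) elim(2)])
    have YD: "Y z * Dli z \<in> carrier_mat n r" by (rule mult_carrier_mat[OF Yc Dlic])
    have s1: "Dli z * V z = L z * (Y z * Dli z * V z)"
    proof -
      have "L z * (Y z * Dli z * V z) = L z * (Y z * (Dli z * V z))" using assoc_mult_mat[OF Yc Dlic Vc] by simp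
      also have "\<dots> = (L z * Y z) * (Dli z * V z)" using assoc_mult_mat[OF Lc Yc mult_carrier_mat[OF Dlic Vc]] by simp
      also have "\<dots> = Dli z * V z" unfolding LY1 using left_mult_one_mat[OF mult_carrier_mat[OF Dlic Vc]] .
      finally show ?thesis by simp
    qed
    have s2: "T z * Y z * Dli z = G z"
    proof -
      have "T z * Y z * Dli z = G z * (Dl z * Dli z)" unfolding TY using assoc_mult_mat[OF Gc Dlc Dlic] by simp
      thus ?thesis using DlDli(1)[OF za] Gc by simp
    qed
    have P: "Dli z * V z * T z * Y z * Dli z = (Dli z * V z) * (T z * Y z * Dli z)"
    proof -
      have DV: "Dli z * V z \<in> carrier_mat r n" by (rule mult_carrier_mat[OF Dlic Vc])
      have "Dli z * V z * T z * Y z * Dli z = (Dli z * V z) * (T z * Y z) * Dli z"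
        using assoc_mult_mat[OF DV Tc Yc] by simp
      also have "\<dots> = (Dli z * V z) * (T z * Y z * Dli z)"
        using assoc_mult_mat[OF DV mult_carrier_mat[OF Tc Yc] Dlic] by simp
      finally show ?thesis .
    qed
    have LTG: "L z * mat_inv (T z) * G z = Dli z"
    proof -
      have "L z * mat_inv (T z) * G z = L z * mat_inv (T z) * (T z * (Y z * Dli z))"
        unfolding s2[symmetric] using assoc_mult_mat[OF Tc Yc Dlic] by simp
      also have "\<dots> = L z * (mat_inv (T z) * (T z * (Y z * Dli z)))"
        using assoc_mult_mat[OF Lc Ti(1) mult_carrier_mat[OF Tc YD]] by simp
      also have "\<dots> = L z * (Y z * Dli z)"
        using assoc_mult_mat[OF Ti(1) Tc YD, symmetric] Ti(2) left_mult_one_mat[OF YD] by simp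
      also have "\<dots> = Dli z" using assoc_mult_mat[OF Lc Yc Dlic, symmetric] LY1 left_mult_one_mat[OF Dlic] by simp
      finally show ?thesis .
    qed
    have "Dli z * V z * T z * Y z * Dli z = L z * (mat_inv (T z) + G1 z) * G z"
      unfolding P s2 unfolding s1 e1 ..
    also have "\<dots> = L z * mat_inv (T z) * G z + L z * G1 z * G z"
      using mult_add_distrib_mat[OF Lc Ti(1) G1c] add_mult_distrib_mat[OF mult_carrier_mat[OF Lc Ti(1)] mult_carrier_mat[OF Lc G1c] Gc]
      by simp
    also have "\<dots> = Dli z + L z * G1 z * G z" unfolding LTG ..
    finally have "Dli z * V z * T z * Y z * Dli z = Dli z + L z * G1 z * G z" .
    moreover have "L z * G1 z * G z \<in> carrier_mat r r" by (rule mult_carrier_mat[OF mult_carrier_mat[OF Lc G1c] Gc])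
    ultimately show ?case unfolding W_def using Dlic Lc Gc by (intro eq_matI) auto
  qed
  thus ?thesis unfolding dot_eq_def using W0 by blast
qed

lemma uniq_bwd:
  assumes V1: "hol0_mat a r n V1" and H: "hol0_mat a r n H"
    and ev: "\<forall>\<^sub>F z in nhds a. V2 z = V1 z + Dl z * H z"
    and de: "dot_eq a n n (\<lambda>z. mat_inv (T z)) (\<lambda>z. Y z * Dli z * V1 z)"
  shows "dot_eq a n n (\<lambda>z. mat_inv (T z)) (\<lambda>z. Y z * Dli z * V2 z)"
proof -
  obtain G1 where G1: "hol0_mat a n n G1" "\<forall>\<^sub>F z in at a. Y z * Dli z * V1 z - mat_inv (T z) = G1 z"
    using de unfolding dot_eq_def by blast
  define W where "W = (\<lambda>z. G1 z + Y z * H z)"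
  have W0: "hol0_mat a n n W" unfolding W_def by (rule hol0_add[OF G1(1) hol0_mult[OF Y0 H]])
  have "\<forall>\<^sub>F z in at a. Y z * Dli z * V2 z - mat_inv (T z) = W z"
    using ev_at2 G1(2) eventually_nhds_at[OF hol0_matD(1)[OF V1]] eventually_nhds_at[OF hol0_matD(1)[OF G1(1)]]
      eventually_nhds_at[OF hol0_matD(1)[OF H]] eventually_nhds_at[OF ev]
  proof eventually_elim
    case (elim z)
    from elim have g2: "good2 z" and za: "z \<noteq> a" by auto
    from g2 have Yc: "Y z \<in> carrier_mat n r" by (auto simp: good2_def good_def)
    note V1c = elim(3) and G1c = elim(4) and Hc = elim(5)
    note Dlic = carr(4)[of z] and Dlc = carr(3)[of z]
    note Ti = Tinv_facts[OF conjunct1[OF g2[unfolded good2_def]] za]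
    have YD: "Y z * Dli z \<in> carrier_mat n r" by (rule mult_carrier_mat[OF Yc Dlic])
    have "Y z * Dli z * V2 z = Y z * Dli z * V1 z + Y z * Dli z * (Dl z * H z)"
      unfolding elim(6) by (rule mult_add_distrib_mat[OF YD V1c mult_carrier_mat[OF Dlc Hc]])
    also have "Y z * Dli z * (Dl z * H z) = Y z * H z"
    proof -
      have "Y z * Dli z * (Dl z * H z) = Y z * (Dli z * (Dl z * H z))" using assoc_mult_mat[OF Yc Dlic mult_carrier_mat[OF Dlc Hc]] by simp
      also have "\<dots> = Y z * H z" using assoc_mult_mat[OF Dlic Dlc Hc, symmetric] DlDli(2)[OF za] Hc by simp
      finally show ?thesis .
    qed
    finally have "Y z * Dli z * V2 z = Y z * Dli z * V1 z + Y z * H z" .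
    moreover have "Y z * Dli z * V1 z = mat_inv (T z) + G1 z"
      by (rule mat_minus_eq[OF mult_carrier_mat[OF YD V1c] Ti(1) elim(2)])
    moreover have "Y z * H z \<in> carrier_mat n n" by (rule mult_carrier_mat[OF Yc Hc])
    ultimately show ?case unfolding W_def using add_minus_cancel_mat[OF Ti(1) G1c] by simp
  qed
  thus ?thesis unfolding dot_eq_def using W0 by blast
qed

end

lemma add_minus_add_mat: "A \<in> carrier_mat nr nc \<Longrightarrow> B \<in> carrier_mat nr nc \<Longrightarrow> C \<in> carrier_mat nr nc \<Longrightarrow>
  (A + B) - (A + C) = B - (C :: 'a :: ab_group_add mat)"
  by (intro eq_matI) auto

context mt begin

lemma DliV_eq: assumes g2: "good2 z" and za: "z \<noteq> a" and Vc: "V \<in> carrier_mat r n" and G1c: "G1 \<in> carrier_mat n n"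
  and e: "Y z * Dli z * V - mat_inv (T z) = G1"
  shows "Dli z * V = L z * mat_inv (T z) + L z * G1"
proof -
  from g2 have Yc: "Y z \<in> carrier_mat n r" by (auto simp: good2_def good_def)
  have Lc: "L z \<in> carrier_mat r n" using g2 by (auto simp: L_def good2_def good_def Ec)
  note Dlic = carr(4)[of z]
  note Ti = Tinv_facts[OF conjunct1[OF g2[unfolded good2_def]] za]
  have e1: "Y z * Dli z * V = mat_inv (T z) + G1"
    by (rule mat_minus_eq[OF mult_carrier_mat[OF mult_carrier_mat[OF Yc Dlic] Vc] Ti(1) e])
  have "L z * (Y z * Dli z * V) = L z * (Y z * (Dli z * V))" using assoc_mult_mat[OF Yc Dlic Vc] by simp
  also have "\<dots> = (L z * Y z) * (Dli z * V)" using assoc_mult_mat[OF Lc Yc mult_carrier_mat[OF Dlic Vc]] by simp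
  also have "\<dots> = Dli z * V" unfolding LY[OF g2] using left_mult_one_mat[OF mult_carrier_mat[OF Dlic Vc]] .
  finally have "Dli z * V = L z * (mat_inv (T z) + G1)" unfolding e1 by simp
  thus ?thesis using mult_add_distrib_mat[OF Lc Ti(1) G1c] by simp
qed

lemma uniq_fwd:
  assumes V1: "hol_mat \<Omega> r n V1" and V2: "hol_mat \<Omega> r n V2"
    and de1: "dot_eq a n n (\<lambda>z. mat_inv (T z)) (\<lambda>z. Y z * Dli z * V1 z)"
    and de2: "dot_eq a n n (\<lambda>z. mat_inv (T z)) (\<lambda>z. Y z * Dli z * V2 z)"
  shows "\<exists>H. hol_mat \<Omega> r n H \<and> (\<forall>z\<in>\<Omega>. V2 z = V1 z + Dl z * H z)"
proof -
  obtain G1 where G1: "hol0_mat a n n G1" "\<forall>\<^sub>F z in at a. Y z * Dli z * V1 z - mat_inv (T z) = G1 z"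
    using de1 unfolding dot_eq_def by blast
  obtain G2 where G2: "hol0_mat a n n G2" "\<forall>\<^sub>F z in at a. Y z * Dli z * V2 z - mat_inv (T z) = G2 z"
    using de2 unfolding dot_eq_def by blast
  have V10: "hol0_mat a r n V1" and V20: "hol0_mat a r n V2" using hol_hol0 V1 V2 by auto
  define K where "K = (\<lambda>z. L z * G2 z - L z * G1 z)"
  have K0: "hol0_mat a r n K" unfolding K_def by (rule hol0_minus[OF hol0_mult[OF L0 G2(1)] hol0_mult[OF L0 G1(1)]])
  have kev: "\<forall>\<^sub>F z in at a. Dli z * (V2 z - V1 z) = K z \<and> V1 z \<in> carrier_mat r n \<and> V2 z \<in> carrier_mat r n \<and> z \<noteq> a"
    using ev_at2 G1(2) G2(2) eventually_nhds_at[OF hol0_matD(1)[OF V10]] eventually_nhds_at[OF hol0_matD(1)[OF V20]]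
      eventually_nhds_at[OF hol0_matD(1)[OF G1(1)]] eventually_nhds_at[OF hol0_matD(1)[OF G2(1)]]
  proof eventually_elim
    case (elim z)
    from elim have g2: "good2 z" and za: "z \<noteq> a" by auto
    have Lc: "L z \<in> carrier_mat r n" using g2 by (auto simp: L_def good2_def good_def Ec)
    note Ti = Tinv_facts[OF conjunct1[OF g2[unfolded good2_def]] za]
    have "Dli z * (V2 z - V1 z) = Dli z * V2 z - Dli z * V1 z"
      by (rule mult_minus_distrib_mat[OF carr(4) elim(5) elim(4)])
    also have "\<dots> = (L z * mat_inv (T z) + L z * G2 z) - (L z * mat_inv (T z) + L z * G1 z)"
      using DliV_eq[OF g2 za elim(5) elim(7) elim(3)] DliV_eq[OF g2 za elim(4) elim(6) elim(2)] by simp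
    also have "\<dots> = K z" unfolding K_def
      by (rule add_minus_add_mat[OF mult_carrier_mat[OF Lc Ti(1)] mult_carrier_mat[OF Lc elim(7)] mult_carrier_mat[OF Lc elim(6)]])
    finally show ?case using elim za by simp
  qed
  have entry: "\<forall>\<^sub>F z in nhds a. V2 z $$ (i,j) - V1 z $$ (i,j) = (z - a) ^ m i * K z $$ (i,j)" if ij: "i < r" "j < n" for i j
  proof (rule ana_eq_at_imp_nhds)
    show "(\<lambda>z. V2 z $$ (i,j) - V1 z $$ (i,j)) analytic_on {a}"
      using hol0_matD(2)[OF V10 ij] hol0_matD(2)[OF V20 ij] by (auto intro!: analytic_intros)
    show "(\<lambda>z. (z - a) ^ m i * K z $$ (i,j)) analytic_on {a}"
      using hol0_matD(2)[OF K0 ij] by (auto intro!: analytic_intros)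
    show "\<forall>\<^sub>F z in at a. V2 z $$ (i,j) - V1 z $$ (i,j) = (z - a) ^ m i * K z $$ (i,j)"
      using kev
    proof eventually_elim
      case (elim z)
      hence "(Dli z * (V2 z - V1 z)) $$ (i,j) = K z $$ (i,j)" by simp
      moreover have "(Dli z * (V2 z - V1 z)) $$ (i,j) = 1 / (z - a) ^ m i * (V2 z $$ (i,j) - V1 z $$ (i,j))"
        unfolding Dli_def using elim ij by (subst mat_diag_mult_left[of _ _ n]) auto
      ultimately show ?case using elim by (simp add: field_simps)
    qed
  qed
  define H where "H = (\<lambda>z. mat r n (\<lambda>(i,j). if z = a then K a $$ (i,j) else (V2 z $$ (i,j) - V1 z $$ (i,j)) / (z - a) ^ m i))"
  have Vent: "(\<lambda>z. V z $$ (i,j)) holomorphic_on \<Omega>" if "hol_mat \<Omega> r n V" "i < r" "j < n" for V i j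
    using that unfolding hol_mat_def by auto
  have Hhol: "hol_mat \<Omega> r n H" unfolding hol_mat_def
  proof (intro conjI ballI allI impI)
    fix z assume "z \<in> \<Omega>" show "H z \<in> carrier_mat r n" by (simp add: H_def)
  next
    fix i j assume ij: "i < r" "j < n"
    show "(\<lambda>z. H z $$ (i,j)) holomorphic_on \<Omega>"
    proof (subst analytic_on_open[OF \<Omega>o, symmetric], subst analytic_on_analytic_at, intro ballI)
      fix z0 assume z0: "z0 \<in> \<Omega>"
      show "(\<lambda>z. H z $$ (i,j)) analytic_on {z0}"
      proof (cases "z0 = a")
        case True
        have "\<forall>\<^sub>F z in nhds a. K z $$ (i,j) = H z $$ (i,j)"
          using entry[OF ij]
        proof eventually_elim
          case (elim z)
          thus ?case using ij by (cases "z = a") (auto simp: H_def field_simps)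
        qed
        hence "(\<lambda>z. H z $$ (i,j)) analytic_on {a}" using hol0_matD(2)[OF K0 ij] by (rule ana_cong[rotated])
        thus ?thesis using True by simp
      next
        case False
        have ev: "\<forall>\<^sub>F z in nhds z0. z \<noteq> a" using eventually_nhds_in_open[of "-{a}" z0] False by auto
        have "\<forall>\<^sub>F z in nhds z0. (V2 z $$ (i,j) - V1 z $$ (i,j)) / (z - a) ^ m i = H z $$ (i,j)"
          using ev by eventually_elim (use ij in \<open>auto simp: H_def\<close>)
        moreover have "(\<lambda>z. (V2 z $$ (i,j) - V1 z $$ (i,j)) / (z - a) ^ m i) analytic_on {z0}"
          using holomorphic_on_imp_analytic_at[OF Vent[OF V1 ij] \<Omega>o z0] holomorphic_on_imp_analytic_at[OF Vent[OF V2 ij] \<Omega>o z0] False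
          by (auto intro!: analytic_intros)
        ultimately show ?thesis by (rule ana_cong[rotated])
      qed
    qed
  qed
  have "\<forall>z\<in>\<Omega>. V2 z = V1 z + Dl z * H z"
  proof
    fix z assume z: "z \<in> \<Omega>"
    have V1c: "V1 z \<in> carrier_mat r n" and V2c: "V2 z \<in> carrier_mat r n" using V1 V2 z unfolding hol_mat_def by auto
    have DH: "Dl z * H z = mat r n (\<lambda>(i,j). (z - a) ^ m i * H z $$ (i,j))"
      unfolding Dl_def by (rule mat_diag_mult_left) (simp add: H_def)
    show "V2 z = V1 z + Dl z * H z"
    proof (rule eq_matI)
      fix i j assume "i < dim_row (V1 z + Dl z * H z)" "j < dim_col (V1 z + Dl z * H z)"
      hence ij: "i < r" "j < n" unfolding DH by auto
      have "V2 z $$ (i,j) = V1 z $$ (i,j) + (z - a) ^ m i * H z $$ (i,j)"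
      proof (cases "z = a")
        case True
        have "V2 a $$ (i, j) - V1 a $$ (i, j) = (a - a) ^ m i * K a $$ (i, j)"
          using eventually_nhds_x_imp_x[OF entry[OF ij]] .
        thus ?thesis using True ij by (simp add: H_def algebra_simps)
      next
        case False
        thus ?thesis using ij by (simp add: H_def)
      qed
      thus "V2 z $$ (i,j) = (V1 z + Dl z * H z) $$ (i,j)" unfolding DH using ij by simp
    qed (use V1c V2c DH in auto)
  qed
  thus ?thesis using Hhol by blast
qed

lemma uniq_bwd_glob:
  assumes V1: "hol_mat \<Omega> r n V1" and H: "hol_mat \<Omega> r n H" and eq: "\<forall>z\<in>\<Omega>. V2 z = V1 z + Dl z * H z"
    and de: "dot_eq a n n (\<lambda>z. mat_inv (T z)) (\<lambda>z. Y z * Dli z * V1 z)"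
  shows "dot_eq a n n (\<lambda>z. mat_inv (T z)) (\<lambda>z. Y z * Dli z * V2 z)"
proof (rule uniq_bwd[OF hol_hol0[OF V1] hol_hol0[OF H] _ de])
  show "\<forall>\<^sub>F z in nhds a. V2 z = V1 z + Dl z * H z"
    using eventually_nhds_in_open[OF \<Omega>o a\<Omega>] eq by (auto elim: eventually_mono)
qed

end

lemma right_inv_transpose_inj:
  fixes A :: "'a :: comm_ring_1 mat"
  assumes A: "A \<in> carrier_mat r n" and B: "B \<in> carrier_mat n r" and AB: "A * B = 1\<^sub>m r"
    and c: "c \<in> carrier_vec r" and z: "transpose_mat A *\<^sub>v c = 0\<^sub>v n"
  shows "c = 0\<^sub>v r"
proof -
  have "c = transpose_mat (A * B) *\<^sub>v c" using AB c by simp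
  also have "\<dots> = transpose_mat B *\<^sub>v (transpose_mat A *\<^sub>v c)"
    unfolding transpose_mult[OF A B] using A B c by (simp add: assoc_mult_mat_vec[of _ r n _ r])
  also have "\<dots> = 0\<^sub>v r" unfolding z by (rule mat_vec_zero) (use B in simp)
  finally show ?thesis .
qed

lemma right_inv_row_nz:
  fixes A :: "'a :: comm_ring_1 mat"
  assumes A: "A \<in> carrier_mat r n" and B: "B \<in> carrier_mat n r" and AB: "A * B = 1\<^sub>m r" and i: "i < r"
  shows "row A i \<noteq> 0\<^sub>v n"
proof
  assume "row A i = 0\<^sub>v n"
  hence "(A * B) $$ (i,i) = 0" using A B i by simp
  thus False using AB i by simp
qed

lemma vec_nth_id: "dim_vec v = n \<Longrightarrow> vec n (($) v) = v" by (intro eq_vecI) auto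

lemma row_mat_of_row_mult: "A \<in> carrier_mat r n \<Longrightarrow> B \<in> carrier_mat n k \<Longrightarrow> i < r \<Longrightarrow>
  row (mat_of_row (row A i) * B) 0 = row (A * B) i"
  by (intro eq_vecI) (auto simp: mat_of_row_def vec_nth_id)

context mt begin

definition "V0 = (\<lambda>z. Mi z * (E * UL z))"
lemma V00: "hol0_mat a r n V0" unfolding V0_def by (rule hol0_mult[OF Mi(1) hol0_mult[OF hol0_const[OF Ec] UL]])

lemma ED: "E * D z = Dl z * E"
proof -
  have "E * D z = mat r n (\<lambda>(i,j). E $$ (i,j) * (z - a) ^ m j)" unfolding D_def by (rule mat_diag_mult_right[OF Ec])
  also have "\<dots> = mat r n (\<lambda>(i,j). (z - a) ^ m i * E $$ (i,j))" by (intro eq_matI) (auto simp: E_def)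
  also have "\<dots> = Dl z * E" unfolding Dl_def by (rule mat_diag_mult_left[symmetric, OF Ec])
  finally show ?thesis .
qed

lemma V0T: assumes g2: "good2 z" shows "V0 z * T z = Dl z * L z"
proof -
  from g2 have c: "T z \<in> carrier_mat n n" "UL z \<in> carrier_mat n n" "UR z \<in> carrier_mat n n"
    "WR z \<in> carrier_mat n n" "Mi z \<in> carrier_mat r r" "X1i z \<in> carrier_mat r r"
    and i: "UR z * WR z = 1\<^sub>m n" "Mi z * M z = 1\<^sub>m r" "X1 z * X1i z = 1\<^sub>m r"
    and s: "UL z * T z * UR z = D z" and dx: "Dl z * X1 z = M z * Dl z"
    by (auto simp: good2_def good_def)
  have Mc: "M z \<in> carrier_mat r r" and X1c: "X1 z \<in> carrier_mat r r" by (auto simp: M_def X1_def)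
  note Dlc = carr(3)[of z]
  have ULT: "UL z * T z = D z * WR z"
  proof -
    have "UL z * T z = UL z * T z * (UR z * WR z)" using i(1) c by simp
    also have "\<dots> = D z * WR z" unfolding s[symmetric] using assoc_mult_mat[OF mult_carrier_mat[OF c(2) c(1)] c(3) c(4)] by simp
    finally show ?thesis .
  qed
  have MiDl: "Mi z * Dl z = Dl z * X1i z"
  proof -
    have "Mi z * Dl z = Mi z * Dl z * (X1 z * X1i z)" using i(3) right_mult_one_mat[OF mult_carrier_mat[OF c(5) Dlc]] by simp
    also have "\<dots> = Mi z * (Dl z * X1 z) * X1i z"
      using assoc_mult_mat[OF mult_carrier_mat[OF c(5) Dlc] X1c c(6)] assoc_mult_mat[OF c(5) Dlc X1c] by simp
    also have "\<dots> = (Mi z * M z) * Dl z * X1i z"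
      unfolding dx using assoc_mult_mat[OF c(5) Mc Dlc] by simp
    also have "\<dots> = Dl z * X1i z" using i(2) left_mult_one_mat[OF Dlc] by simp
    finally show ?thesis .
  qed
  have "V0 z * T z = Mi z * (E * (UL z * T z))" unfolding V0_def
    using assoc_mult_mat[OF c(5) mult_carrier_mat[OF Ec c(2)] c(1)] assoc_mult_mat[OF Ec c(2) c(1)] by simp
  also have "\<dots> = Mi z * (Dl z * (E * WR z))" unfolding ULT
    using assoc_mult_mat[OF Ec carr(1) c(4), symmetric] ED assoc_mult_mat[OF Dlc Ec c(4)] by simp
  also have "\<dots> = Dl z * L z" unfolding L_def
    using assoc_mult_mat[OF c(5) Dlc mult_carrier_mat[OF Ec c(4)], symmetric] MiDl assoc_mult_mat[OF Dlc c(6) mult_carrier_mat[OF Ec c(4)]] by simp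
  finally show ?thesis .
qed

lemma Dinv_Z: assumes Zc: "Z \<in> carrier_mat n k" and Z0: "\<And>i j. i < r \<Longrightarrow> j < k \<Longrightarrow> Z $$ (i,j) = 0"
  shows "Dinv z * Z = Z"
proof -
  have "Dinv z * Z = mat n k (\<lambda>(i,j). 1 / (z - a) ^ m i * Z $$ (i,j))" unfolding Dinv_def by (rule mat_diag_mult_left[OF Zc])
  also have "\<dots> = Z"
  proof (rule eq_matI)
    fix i j assume "i < dim_row Z" "j < dim_col Z"
    hence ij: "i < n" "j < k" using Zc by auto
    show "mat n k (\<lambda>(i,j). 1 / (z - a) ^ m i * Z $$ (i,j)) $$ (i,j) = Z $$ (i,j)"
      using ij Z0 m_zero[of i] by (cases "i < r") auto
  qed (use Zc in auto)
  finally show ?thesis .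
qed

lemma V0_dot: "dot_eq a n n (\<lambda>z. mat_inv (T z)) (\<lambda>z. Y z * Dli z * V0 z)"
proof -
  define W where "W = (\<lambda>z. UR z * (N z * V0 z - UL z))"
  have W0: "hol0_mat a n n W" unfolding W_def by (rule hol0_mult[OF UR hol0_minus[OF hol0_mult[OF N0 V00] UL]])
  have "\<forall>\<^sub>F z in at a. Y z * Dli z * V0 z - mat_inv (T z) = W z"
    using ev_at2
  proof eventually_elim
    case (elim z)
    from elim have g2: "good2 z" and za: "z \<noteq> a" by auto
    from g2 have c: "T z \<in> carrier_mat n n" "UL z \<in> carrier_mat n n" "UR z \<in> carrier_mat n n"
      "WR z \<in> carrier_mat n n" "Mi z \<in> carrier_mat r r" "X z \<in> carrier_mat n r" "Y z \<in> carrier_mat n r"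
      and i: "M z * Mi z = 1\<^sub>m r" and dx: "D z * X z = N z * Dl z" and gd: "good z"
      by (auto simp: good2_def good_def)
    have Nc: "N z \<in> carrier_mat n r" by (rule N_carr[OF gd])
    have Mc: "M z \<in> carrier_mat r r" by (simp add: M_def)
    have V0c: "V0 z \<in> carrier_mat r n" unfolding V0_def by (rule mult_carrier_mat[OF c(5) mult_carrier_mat[OF Ec c(2)]])
    note Dlc = carr(3)[of z] and Dlic = carr(4)[of z] and Dc = carr(1)[of z] and Dic = carr(2)[of z]
    have XDli: "X z * Dli z = Dinv z * N z"
    proof -
      have "X z = Dinv z * (D z * X z)"
        using assoc_mult_mat[OF Dic Dc c(6), symmetric] DDinv(2)[OF za] c(6) by simp
      also have "\<dots> = Dinv z * (N z * Dl z)" unfolding dx ..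
      finally have "X z * Dli z = Dinv z * (N z * Dl z) * Dli z" by simp
      also have "\<dots> = Dinv z * (N z * (Dl z * Dli z))"
        using assoc_mult_mat[OF Dic mult_carrier_mat[OF Nc Dlc] Dlic] assoc_mult_mat[OF Nc Dlc Dlic] by simp
      also have "\<dots> = Dinv z * N z" using DlDli(1)[OF za] Nc by simp
      finally show ?thesis .
    qed
    have YDV: "Y z * Dli z * V0 z = UR z * (Dinv z * (N z * V0 z))"
    proof -
      have "Y z * Dli z * V0 z = UR z * (X z * Dli z * V0 z)"
        unfolding Y_UR_X[OF gd] using assoc_mult_mat[OF c(3) c(6) Dlic] assoc_mult_mat[OF c(3) mult_carrier_mat[OF c(6) Dlic] V0c] by simp
      also have "\<dots> = UR z * (Dinv z * (N z * V0 z))" unfolding XDli using assoc_mult_mat[OF Dic Nc V0c] by simp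
      finally show ?thesis .
    qed
    have Zc: "N z * V0 z - UL z \<in> carrier_mat n n" using Nc V0c c(2) by (simp add: minus_carrier_mat)
    have EZ: "E * (N z * V0 z) = E * UL z"
    proof -
      have "E * (N z * V0 z) = M z * V0 z" using assoc_mult_mat[OF Ec Nc V0c, symmetric] EN[OF gd] by simp
      also have "\<dots> = (M z * Mi z) * (E * UL z)" unfolding V0_def
        using assoc_mult_mat[OF Mc c(5) mult_carrier_mat[OF Ec c(2)]] by simp
      also have "\<dots> = E * UL z" using i left_mult_one_mat[OF mult_carrier_mat[OF Ec c(2)]] by simp
      finally show ?thesis .
    qed
    have Z0: "(N z * V0 z - UL z) $$ (i,j) = 0" if "i < r" "j < n" for i j
    proof -
      have "(E * (N z * V0 z)) $$ (i,j) = (E * UL z) $$ (i,j)" using EZ by simp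
      hence "(N z * V0 z) $$ (i,j) = UL z $$ (i,j)"
        unfolding E_mult[OF mult_carrier_mat[OF Nc V0c]] E_mult[OF c(2)] using that by simp
      thus ?thesis using that r_le_n c(2) by simp
    qed
    have "Y z * Dli z * V0 z - mat_inv (T z) = UR z * (Dinv z * (N z * V0 z)) - UR z * (Dinv z * UL z)"
      unfolding YDV Tinv_eq[OF gd za] ..
    also have "\<dots> = UR z * (Dinv z * (N z * V0 z) - Dinv z * UL z)"
      by (rule mult_minus_distrib_mat[symmetric, OF c(3) mult_carrier_mat[OF Dic mult_carrier_mat[OF Nc V0c]] mult_carrier_mat[OF Dic c(2)]])
    also have "\<dots> = UR z * (Dinv z * (N z * V0 z - UL z))"
      using mult_minus_distrib_mat[OF Dic mult_carrier_mat[OF Nc V0c] c(2)] by simp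
    also have "\<dots> = W z" using Dinv_Z[OF Zc Z0, of z] unfolding W_def by simp
    finally show ?case .
  qed
  thus ?thesis unfolding dot_eq_def using W0 by blast
qed

end

context mt begin

lemma EEt: "E * transpose_mat E = 1\<^sub>m r"
proof (rule eq_matI)
  fix i j assume "i < dim_row (1\<^sub>m r)" "j < dim_col (1\<^sub>m r)"
  hence ij: "i < r" "j < r" by auto
  have "(E * transpose_mat E) $$ (i,j) = (\<Sum>l = 0..<n. (if i = l then 1 else 0) * (if j = l then 1 else 0))"
    using ij r_le_n by (auto simp: E_def scalar_prod_def intro!: sum.cong)
  also have "\<dots> = (if i = j then 1 else 0)" using ij r_le_n
    by (auto simp: if_distrib[of "\<lambda>x. x * _"] sum.delta cong: if_cong)
  finally show "(E * transpose_mat E) $$ (i,j) = 1\<^sub>m r $$ (i,j)" using ij by simp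
qed (auto simp: E_def)

lemma V0a_rinv: "V0 a * (WL a * (transpose_mat E * M a)) = 1\<^sub>m r"
proof -
  from good2_def ev_good2[THEN eventually_nhds_x_imp_x]
  have g2: "good2 a" by simp
  from g2 have c: "UL a \<in> carrier_mat n n" "WL a \<in> carrier_mat n n" "Mi a \<in> carrier_mat r r"
    and i: "UL a * WL a = 1\<^sub>m n" "Mi a * M a = 1\<^sub>m r" by (auto simp: good2_def good_def)
  have Mc: "M a \<in> carrier_mat r r" by (simp add: M_def)
  have Etc: "transpose_mat E \<in> carrier_mat n r" using Ec by simp
  have EM: "transpose_mat E * M a \<in> carrier_mat n r" by (rule mult_carrier_mat[OF Etc Mc])
  have "(E * UL a) * (WL a * (transpose_mat E * M a)) = E * (UL a * (WL a * (transpose_mat E * M a)))"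
    by (rule assoc_mult_mat[OF Ec c(1) mult_carrier_mat[OF c(2) EM]])
  also have "\<dots> = E * (transpose_mat E * M a)"
    using cancel_l[OF c(1) c(2) EM i(1)] by simp
  also have "\<dots> = M a" using assoc_mult_mat[OF Ec Etc Mc, symmetric] EEt left_mult_one_mat[OF Mc] by simp
  finally have "(E * UL a) * (WL a * (transpose_mat E * M a)) = M a" .
  thus ?thesis unfolding V0_def
    using assoc_mult_mat[OF c(3) mult_carrier_mat[OF Ec c(1)] mult_carrier_mat[OF c(2) EM]] i(2) by simp
qed

lemma exists_V: "\<exists>V. left_canonical \<Omega> a n T m V \<and> dot_eq a n n (\<lambda>z. mat_inv (T z)) (\<lambda>z. Y z * Dli z * V z)"
proof -
  define Nn where "Nn = Suc (m 0)"
  have mle: "m i < Nn" if "i < r" for i using msort that r_le_n unfolding Nn_def by (simp add: le_imp_less_Suc)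
  have "\<forall>p. \<exists>Ph :: (complex \<Rightarrow> complex) \<times> (complex \<Rightarrow> complex). fst p < r \<longrightarrow> snd p < n \<longrightarrow>
     fst Ph holomorphic_on UNIV \<and> snd Ph analytic_on {a} \<and> (\<forall>\<^sub>F z in nhds a. V0 z $$ p = fst Ph z + (z - a) ^ Nn * snd Ph z)"
  proof
    fix p :: "nat \<times> nat"
    show "\<exists>Ph :: (complex \<Rightarrow> complex) \<times> (complex \<Rightarrow> complex). fst p < r \<longrightarrow> snd p < n \<longrightarrow>
     fst Ph holomorphic_on UNIV \<and> snd Ph analytic_on {a} \<and> (\<forall>\<^sub>F z in nhds a. V0 z $$ p = fst Ph z + (z - a) ^ Nn * snd Ph z)"
    proof (cases "fst p < r \<and> snd p < n")
      case True
      obtain i j where p: "p = (i,j)" by (cases p)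
      have "(\<lambda>z. V0 z $$ (i, j)) analytic_on {a}" using hol0_matD(2)[OF V00] True p by auto
      from poly_approx[OF this, of Nn] obtain P h where "P holomorphic_on UNIV" "h analytic_on {a}"
        "\<forall>\<^sub>F z in nhds a. V0 z $$ (i, j) = P z + (z - a) ^ Nn * h z" by blast
      thus ?thesis using p by (intro exI[of _ "(P, h)"]) simp
    qed auto
  qed
  from choice[OF this] obtain PH :: "nat \<times> nat \<Rightarrow> (complex \<Rightarrow> complex) \<times> (complex \<Rightarrow> complex)" where
    PH0: "\<forall>p. fst p < r \<longrightarrow> snd p < n \<longrightarrow> fst (PH p) holomorphic_on UNIV \<and> snd (PH p) analytic_on {a} \<and>
       (\<forall>\<^sub>F z in nhds a. V0 z $$ p = fst (PH p) z + (z - a) ^ Nn * snd (PH p) z)" by blast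
  have PH: "fst (PH (i,j)) holomorphic_on UNIV \<and> snd (PH (i,j)) analytic_on {a} \<and>
       (\<forall>\<^sub>F z in nhds a. V0 z $$ (i,j) = fst (PH (i,j)) z + (z - a) ^ Nn * snd (PH (i,j)) z)"
    if "i < r" "j < n" for i j using PH0[rule_format, of "(i,j)"] that by simp
  define Vp where "Vp = (\<lambda>z. mat r n (\<lambda>(i,j). fst (PH (i,j)) z))"
  define R where "R = (\<lambda>z. mat r n (\<lambda>(i,j). snd (PH (i,j)) z))"
  define H0 where "H0 = (\<lambda>z. mat_diag r (\<lambda>i. - ((z - a) ^ (Nn - m i))) * R z)"
  have R0: "hol0_mat a r n R" unfolding R_def by (rule hol0_mat_mat) (use PH in auto)
  have H00: "hol0_mat a r n H0" unfolding H0_def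
    by (rule hol0_mult[OF hol0_diag R0]) (auto intro!: analytic_intros)
  have H0e: "H0 z = mat r n (\<lambda>(i,j). - ((z - a) ^ (Nn - m i)) * R z $$ (i,j))" for z
    unfolding H0_def by (rule mat_diag_mult_left) (simp add: R_def)
  have DlH0: "Dl z * H0 z = mat r n (\<lambda>(i,j). - ((z - a) ^ Nn) * R z $$ (i,j))" for z
  proof -
    have "Dl z * H0 z = mat r n (\<lambda>(i,j). (z - a) ^ m i * H0 z $$ (i,j))"
      unfolding Dl_def by (rule mat_diag_mult_left) (simp add: H0e)
    also have "\<dots> = mat r n (\<lambda>(i,j). - ((z - a) ^ Nn) * R z $$ (i,j))"
    proof (rule eq_matI)
      fix i j assume "i < dim_row (mat r n (\<lambda>(i,j). - ((z - a) ^ Nn) * R z $$ (i,j)))"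
        "j < dim_col (mat r n (\<lambda>(i,j). - ((z - a) ^ Nn) * R z $$ (i,j)))"
      hence ij: "i < r" "j < n" by auto
      have "(z - a) ^ m i * (z - a) ^ (Nn - m i) = (z - a) ^ Nn"
        using mle[OF ij(1)] by (simp flip: power_add)
      thus "mat r n (\<lambda>(i,j). (z - a) ^ m i * H0 z $$ (i,j)) $$ (i,j) = mat r n (\<lambda>(i,j). - ((z - a) ^ Nn) * R z $$ (i,j)) $$ (i,j)"
        using ij by (simp add: H0e mult.assoc[symmetric])
    qed auto
    finally show ?thesis .
  qed
  have evV: "\<forall>\<^sub>F z in nhds a. Vp z = V0 z + Dl z * H0 z"
  proof -
    have "\<forall>\<^sub>F z in nhds a. \<forall>p\<in>{..<r} \<times> {..<n}. V0 z $$ p = fst (PH p) z + (z - a) ^ Nn * snd (PH p) z"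
      by (rule eventually_ball_finite) (use PH in auto)
    thus ?thesis using hol0_matD(1)[OF V00]
    proof eventually_elim
      case (elim z)
      show ?case
      proof (rule eq_matI)
        fix i j assume "i < dim_row (V0 z + Dl z * H0 z)" "j < dim_col (V0 z + Dl z * H0 z)"
        hence ij: "i < r" "j < n" unfolding DlH0 by auto
        thus "Vp z $$ (i,j) = (V0 z + Dl z * H0 z) $$ (i,j)" unfolding DlH0 using elim(1) ij
          by (auto simp: Vp_def R_def)
      qed (use elim(2) in \<open>auto simp: Vp_def DlH0\<close>)
    qed
  qed
  have Vhol: "hol_mat \<Omega> r n Vp" unfolding hol_mat_def
  proof (intro conjI ballI allI impI)
    fix z show "Vp z \<in> carrier_mat r n" by (simp add: Vp_def)
  next
    fix i j assume ij: "i < r" "j < n"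
    have "(\<lambda>z. Vp z $$ (i,j)) = fst (PH (i,j))" using ij by (auto simp: Vp_def)
    thus "(\<lambda>z. Vp z $$ (i,j)) holomorphic_on \<Omega>" using conjunct1[OF PH[OF ij]] holomorphic_on_subset by auto
  qed
  have dot: "dot_eq a n n (\<lambda>z. mat_inv (T z)) (\<lambda>z. Y z * Dli z * Vp z)"
    by (rule uniq_bwd[OF V00 H00 evV V0_dot])
  have H0a: "H0 a = 0\<^sub>m r n" unfolding H0e using mle by (intro eq_matI) auto
  have Vpa: "Vp a = V0 a"
    using eventually_nhds_x_imp_x[OF evV] eventually_nhds_x_imp_x[OF hol0_matD(1)[OF V00]]
    unfolding H0a right_mult_zero_mat[OF carr(3)] by simp
  have g2a: "good2 a" using eventually_nhds_x_imp_x[OF ev_good2] .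
  have WLa: "WL a \<in> carrier_mat n n" using g2a by (auto simp: good2_def good_def)
  have Rrc: "WL a * (transpose_mat E * M a) \<in> carrier_mat n r"
    by (rule mult_carrier_mat[OF WLa mult_carrier_mat]) (auto simp: E_def M_def)
  have Vpac: "Vp a \<in> carrier_mat r n" by (simp add: Vp_def)
  have Vpinv: "Vp a * (WL a * (transpose_mat E * M a)) = 1\<^sub>m r" unfolding Vpa by (rule V0a_rinv)
  define K where "K = (\<lambda>z. L z + H0 z * T z)"
  have K0: "hol0_mat a r n K" unfolding K_def by (rule hol0_add[OF L0 hol0_mult[OF H00 T0]])
  have VpT: "\<forall>\<^sub>F z in nhds a. Vp z * T z = Dl z * K z"
    using evV ev_good2 hol0_matD(1)[OF V00] hol0_matD(1)[OF H00] hol0_matD(1)[OF L0]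
  proof eventually_elim
    case (elim z)
    have Tc: "T z \<in> carrier_mat n n" using elim(2) by (auto simp: good2_def good_def)
    note Dlc = carr(3)[of z]
    have "Vp z * T z = V0 z * T z + Dl z * H0 z * T z"
      unfolding elim(1) by (rule add_mult_distrib_mat[OF elim(3) mult_carrier_mat[OF Dlc elim(4)] Tc])
    also have "\<dots> = Dl z * L z + Dl z * (H0 z * T z)"
      using V0T[OF elim(2)] assoc_mult_mat[OF Dlc elim(4) Tc] by simp
    also have "\<dots> = Dl z * K z" unfolding K_def
      by (rule mult_add_distrib_mat[symmetric, OF Dlc elim(5) mult_carrier_mat[OF elim(4) Tc]])
    finally show ?case .
  qed
  have Ka: "K a = L a" unfolding K_def H0a using g2a hol0_matD(1)[OF L0, THEN eventually_nhds_x_imp_x]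
    by (auto simp: good2_def good_def)
  have La_rinv: "L a * Y a = 1\<^sub>m r" by (rule LY[OF g2a])
  have Lac: "L a \<in> carrier_mat r n" using hol0_matD(1)[OF L0, THEN eventually_nhds_x_imp_x] .
  have Yac: "Y a \<in> carrier_mat n r" using g2a by (auto simp: good2_def good_def)
  have vzo: "vec_zero_order a n (\<lambda>z. row (mat_of_row (row (Vp z) i) * T z) 0) (m i)" if i: "i < r" for i
    unfolding vec_zero_order_def
  proof (intro exI[of _ "\<lambda>z. row (K z) i"] conjI allI impI)
    show "\<forall>\<^sub>F z in nhds a. row (K z) i \<in> carrier_vec n"
      using hol0_matD(1)[OF K0] by eventually_elim auto
    show "row (K a) i \<noteq> 0\<^sub>v n" unfolding Ka by (rule right_inv_row_nz[OF Lac Yac La_rinv i])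
    fix j assume j: "j < n"
    have "\<forall>\<^sub>F z in nhds a. K z $$ (i,j) = row (K z) i $ j"
      using hol0_matD(1)[OF K0] by eventually_elim (use i j in auto)
    thus "(\<lambda>z. row (K z) i $ j) analytic_on {a}" using hol0_matD(2)[OF K0 i j] by (rule ana_cong[rotated])
  next
    show "\<forall>\<^sub>F z in nhds a. row (mat_of_row (row (Vp z) i) * T z) 0 = (z - a) ^ m i \<cdot>\<^sub>v row (K z) i"
      using VpT ev_good hol0_matD(1)[OF K0]
    proof eventually_elim
      case (elim z)
      have Tc: "T z \<in> carrier_mat n n" using elim(2) by (auto simp: good_def)
      have "row (mat_of_row (row (Vp z) i) * T z) 0 = row (Vp z * T z) i"
        by (rule row_mat_of_row_mult[OF _ Tc i]) (simp add: Vp_def)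
      also have "\<dots> = row (Dl z * K z) i" using elim(1) by simp
      also have "\<dots> = (z - a) ^ m i \<cdot>\<^sub>v row (K z) i"
        unfolding Dl_def mat_diag_mult_left[OF elim(3)] using i elim(3) by (intro eq_vecI) auto
      finally show ?case .
    qed
  qed
  have lrm: "left_root_mult a n T (\<lambda>z. row (Vp z) i) = m i" if "i < r" for i
    unfolding left_root_mult_def by (rule vzo_the[OF vzo[OF that]])
  have "left_canonical \<Omega> a n T m Vp"
    unfolding left_canonical_def Let_def r_def[symmetric]
  proof (intro conjI allI impI ballI)
    show "hol_mat \<Omega> r n Vp" by (rule Vhol)
    show "(\<Sum>i<r. left_root_mult a n T (\<lambda>z. row (Vp z) i)) = (\<Sum>i<r. m i)" using lrm by simp
    show "\<And>i j. i \<le> j \<Longrightarrow> j < r \<Longrightarrow> left_root_mult a n T (\<lambda>z. row (Vp z) j) \<le> left_root_mult a n T (\<lambda>z. row (Vp z) i)"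
      using lrm msort r_le_n by simp
    fix c assume c: "c \<in> carrier_vec r" "transpose_mat (Vp a) *\<^sub>v c = 0\<^sub>v n"
    show "c = 0\<^sub>v r" by (rule right_inv_transpose_inj[OF Vpac Rrc Vpinv c])
  next
    fix i assume i: "i < r"
    show "left_root_fun \<Omega> a n T (\<lambda>z. row (Vp z) i)" unfolding left_root_fun_def
    proof (intro conjI allI impI ballI)
      fix z show "row (Vp z) i \<in> carrier_vec n" by (rule carrier_vecI) (simp add: Vp_def)
    next
      fix j assume j: "j < n"
      have "(\<lambda>z. row (Vp z) i $ j) = fst (PH (i,j))" using i j by (auto simp: Vp_def)
      thus "(\<lambda>z. row (Vp z) i $ j) holomorphic_on \<Omega>"
        using holomorphic_on_subset[OF conjunct1[OF PH[OF i j]], of \<Omega>] by simp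
    next
      show "row (Vp a) i \<noteq> 0\<^sub>v n" by (rule right_inv_row_nz[OF Vpac Rrc Vpinv i])
    next
      obtain g :: "complex \<Rightarrow> complex vec" where g: "\<forall>\<^sub>F z in nhds a. g z \<in> carrier_vec n"
        "\<forall>\<^sub>F z in nhds a. row (mat_of_row (row (Vp z) i) * T z) 0 = (z - a) ^ m i \<cdot>\<^sub>v g z"
        using vzo[OF i] unfolding vec_zero_order_def by blast
      have ga: "g a \<in> carrier_vec n" using eventually_nhds_x_imp_x[OF g(1)] .
      have "row (mat_of_row (row (Vp a) i) * T a) 0 = (a - a) ^ m i \<cdot>\<^sub>v g a"
        using eventually_nhds_x_imp_x[OF g(2)] .
      also have "\<dots> = 0\<^sub>v n" using m_pos[OF i] ga by (intro eq_vecI) auto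
      finally have "row (mat_of_row (row (Vp a) i) * T a) 0 = 0\<^sub>v n" .
      note r0 = this
      have Bc: "mat_of_row (row (Vp a) i) * T a \<in> carrier_mat 1 n"
      proof (rule mult_carrier_mat[OF mat_of_row_carrier(1)])
        show "row (Vp a) i \<in> carrier_vec n" by (rule carrier_vecI) (simp add: Vp_def)
        show "T a \<in> carrier_mat n n" using g2a unfolding good2_def good_def by blast
      qed
      have dB: "dim_row (mat_of_row (row (Vp a) i) * T a) = 1" "dim_col (mat_of_row (row (Vp a) i) * T a) = n"
        using Bc by auto
      show "mat_of_row (row (Vp a) i) * T a = 0\<^sub>m 1 n"
      proof (rule eq_matI)
        fix i' j assume ij: "i' < dim_row (0\<^sub>m 1 n :: complex mat)" "j < dim_col (0\<^sub>m 1 n :: complex mat)"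
        hence i0: "i' = 0" and jn: "j < n" by auto
        have "(mat_of_row (row (Vp a) i) * T a) $$ (0, j) = row (mat_of_row (row (Vp a) i) * T a) 0 $ j"
          by (rule index_row(1)[symmetric]) (use dB jn in auto)
        also have "\<dots> = 0" using r0 jn by simp
        finally show "(mat_of_row (row (Vp a) i) * T a) $$ (i', j) = 0\<^sub>m 1 n $$ (i', j)"
          using i0 jn by simp
      qed (use dB in auto)
    qed
  qed
  thus ?thesis using dot by blast
qed

lemma main_loc:
  shows "(\<exists>V. left_canonical \<Omega> a n T m V \<and> dot_eq a n n (\<lambda>z. mat_inv (T z)) (\<lambda>z. Y z * Dli z * V z))
       \<and> (\<forall>V1 V2. hol_mat \<Omega> r n V1 \<and> dot_eq a n n (\<lambda>z. mat_inv (T z)) (\<lambda>z. Y z * Dli z * V1 z)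
             \<and> hol_mat \<Omega> r n V2 \<longrightarrow>
             (dot_eq a n n (\<lambda>z. mat_inv (T z)) (\<lambda>z. Y z * Dli z * V2 z) \<longleftrightarrow>
              (\<exists>H. hol_mat \<Omega> r n H \<and> (\<forall>z\<in>\<Omega>. V2 z = V1 z + Dl z * H z))))
       \<and> (\<forall>V. hol_mat \<Omega> r n V \<and> dot_eq a n n (\<lambda>z. mat_inv (T z)) (\<lambda>z. Y z * Dli z * V z) \<longrightarrow>
             dot_eq a r r (\<lambda>z. Dli z * V z * T z * Y z * Dli z) Dli)"
proof (intro conjI allI impI)
  show "\<exists>V. left_canonical \<Omega> a n T m V \<and> dot_eq a n n (\<lambda>z. mat_inv (T z)) (\<lambda>z. Y z * Dli z * V z)"
    by (rule exists_V)
next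
  fix V1 V2 assume h: "hol_mat \<Omega> r n V1 \<and> dot_eq a n n (\<lambda>z. mat_inv (T z)) (\<lambda>z. Y z * Dli z * V1 z) \<and> hol_mat \<Omega> r n V2"
  show "dot_eq a n n (\<lambda>z. mat_inv (T z)) (\<lambda>z. Y z * Dli z * V2 z) \<longleftrightarrow>
              (\<exists>H. hol_mat \<Omega> r n H \<and> (\<forall>z\<in>\<Omega>. V2 z = V1 z + Dl z * H z))"
  proof
    assume "dot_eq a n n (\<lambda>z. mat_inv (T z)) (\<lambda>z. Y z * Dli z * V2 z)"
    thus "\<exists>H. hol_mat \<Omega> r n H \<and> (\<forall>z\<in>\<Omega>. V2 z = V1 z + Dl z * H z)"
      using uniq_fwd[of V1 V2] h by simp
  next
    assume "\<exists>H. hol_mat \<Omega> r n H \<and> (\<forall>z\<in>\<Omega>. V2 z = V1 z + Dl z * H z)"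
    then obtain H where "hol_mat \<Omega> r n H" "\<forall>z\<in>\<Omega>. V2 z = V1 z + Dl z * H z" by blast
    thus "dot_eq a n n (\<lambda>z. mat_inv (T z)) (\<lambda>z. Y z * Dli z * V2 z)"
      using uniq_bwd_glob[of V1 H V2] h by simp
  qed
next
  fix V assume "hol_mat \<Omega> r n V \<and> dot_eq a n n (\<lambda>z. mat_inv (T z)) (\<lambda>z. Y z * Dli z * V z)"
  thus "dot_eq a r r (\<lambda>z. Dli z * V z * T z * Y z * Dli z) Dli" using part3[OF hol_hol0] by simp
qed

lemma main_loc2:
  shows "(\<exists>V. left_canonical \<Omega> a n T m V \<and>
             dot_eq a n n (\<lambda>z. mat_inv (T z)) (\<lambda>z. Y z * mat_diag (kernel_dim (T a)) (\<lambda>i. 1 / (z - a) ^ m i) * V z))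
       \<and> (\<forall>V1 V2. hol_mat \<Omega> (kernel_dim (T a)) n V1 \<and> dot_eq a n n (\<lambda>z. mat_inv (T z)) (\<lambda>z. Y z * mat_diag (kernel_dim (T a)) (\<lambda>i. 1 / (z - a) ^ m i) * V1 z)
             \<and> hol_mat \<Omega> (kernel_dim (T a)) n V2 \<longrightarrow>
             (dot_eq a n n (\<lambda>z. mat_inv (T z)) (\<lambda>z. Y z * mat_diag (kernel_dim (T a)) (\<lambda>i. 1 / (z - a) ^ m i) * V2 z) \<longleftrightarrow>
              (\<exists>H. hol_mat \<Omega> (kernel_dim (T a)) n H \<and> (\<forall>z\<in>\<Omega>. V2 z = V1 z + mat_diag (kernel_dim (T a)) (\<lambda>i. (z - a) ^ m i) * H z))))
       \<and> (\<forall>V. hol_mat \<Omega> (kernel_dim (T a)) n V \<and> dot_eq a n n (\<lambda>z. mat_inv (T z)) (\<lambda>z. Y z * mat_diag (kernel_dim (T a)) (\<lambda>i. 1 / (z - a) ^ m i) * V z) \<longrightarrow>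
             dot_eq a (kernel_dim (T a)) (kernel_dim (T a)) (\<lambda>z. mat_diag (kernel_dim (T a)) (\<lambda>i. 1 / (z - a) ^ m i) * V z * T z * Y z * mat_diag (kernel_dim (T a)) (\<lambda>i. 1 / (z - a) ^ m i)) (\<lambda>z. mat_diag (kernel_dim (T a)) (\<lambda>i. 1 / (z - a) ^ m i)))"
  using main_loc unfolding Dli_def Dl_def r_def .

end

theorem mainTheorem2:
  fixes \<Omega> :: "complex set" and l0 :: complex and n :: nat
    and T Y :: "complex \<Rightarrow> complex mat" and m :: "nat \<Rightarrow> nat"
  assumes "open \<Omega>" and "connected \<Omega>" and "l0 \<in> \<Omega>"
    and "hol_mat \<Omega> n n T"
    and "\<exists>z\<in>\<Omega>. det (T z) \<noteq> 0"
    and "det (T l0) = 0"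
    and "partial_mults l0 n T m"
    and "right_canonical \<Omega> l0 n T m Y"
  defines "r \<equiv> kernel_dim (T l0)"
    and "\<Delta> \<equiv> (\<lambda>z. mat_diag (kernel_dim (T l0)) (\<lambda>i. (z - l0) ^ m i))"
    and "\<Delta>inv \<equiv> (\<lambda>z. mat_diag (kernel_dim (T l0)) (\<lambda>i. 1 / (z - l0) ^ m i))"
    and "Tinv \<equiv> (\<lambda>z. mat_inv (T z))"
  shows "(\<exists>V. left_canonical \<Omega> l0 n T m V \<and>
             dot_eq l0 n n Tinv (\<lambda>z. Y z * \<Delta>inv z * V z))
       \<and> (\<forall>V1 V2. hol_mat \<Omega> r n V1 \<and> dot_eq l0 n n Tinv (\<lambda>z. Y z * \<Delta>inv z * V1 z)
             \<and> hol_mat \<Omega> r n V2 \<longrightarrow>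
             (dot_eq l0 n n Tinv (\<lambda>z. Y z * \<Delta>inv z * V2 z) \<longleftrightarrow>
              (\<exists>H. hol_mat \<Omega> r n H \<and> (\<forall>z\<in>\<Omega>. V2 z = V1 z + \<Delta> z * H z))))
       \<and> (\<forall>V. hol_mat \<Omega> r n V \<and> dot_eq l0 n n Tinv (\<lambda>z. Y z * \<Delta>inv z * V z) \<longrightarrow>
             dot_eq l0 r r (\<lambda>z. \<Delta>inv z * V z * T z * Y z * \<Delta>inv z) \<Delta>inv)"
proof -
  from assms(7) obtain UL UR where U: "unimodular0 l0 n UL" "unimodular0 l0 n UR"
    and sm: "\<forall>\<^sub>F z in nhds l0. UL z * T z * UR z = mat_diag n (\<lambda>i. (z - l0) ^ m i)"
    and ms: "\<forall>i j. i \<le> j \<longrightarrow> j < n \<longrightarrow> m j \<le> m i"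
    unfolding partial_mults_def by blast
  from U(1) obtain WL where WL: "hol0_mat l0 n n WL" "\<forall>\<^sub>F z in nhds l0. UL z * WL z = 1\<^sub>m n \<and> WL z * UL z = 1\<^sub>m n"
    unfolding unimodular0_def by blast
  from U(2) obtain WR where WR: "hol0_mat l0 n n WR" "\<forall>\<^sub>F z in nhds l0. UR z * WR z = 1\<^sub>m n \<and> WR z * UR z = 1\<^sub>m n"
    unfolding unimodular0_def by blast
  have ax: "mt \<Omega> l0 n T Y m UL UR WL WR"
  proof (unfold_locales)
    show "open \<Omega>" "l0 \<in> \<Omega>" "hol_mat \<Omega> n n T" "right_canonical \<Omega> l0 n T m Y" using assms by auto
    show "\<forall>i j. i \<le> j \<longrightarrow> j < n \<longrightarrow> m j \<le> m i" by (rule ms)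
    show "hol0_mat l0 n n UL" "hol0_mat l0 n n UR" using U unfolding unimodular0_def by auto
    show "hol0_mat l0 n n WL" "hol0_mat l0 n n WR" using WL(1) WR(1) .
    show "\<forall>\<^sub>F z in nhds l0. UL z * WL z = 1\<^sub>m n \<and> WL z * UL z = 1\<^sub>m n" by (rule WL(2))
    show "\<forall>\<^sub>F z in nhds l0. UR z * WR z = 1\<^sub>m n \<and> WR z * UR z = 1\<^sub>m n" by (rule WR(2))
    show "\<forall>\<^sub>F z in nhds l0. UL z * T z * UR z = mat_diag n (\<lambda>i. (z - l0) ^ m i)" by (rule sm)
  qed
  from mt.main_loc2[OF ax]
  show ?thesis unfolding assms(9-12) .
qed


end
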